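(* Let $f:\mathbb{R}^{d_1}\times\mathbb{R}^{d_2}\to\mathbb{R}$ satisfy: (i) for every fixed $x$, $\max_y f(x,y)$ has a nonempty solution set and a finite optimal value, and there is $\mu>0$ with $\|\nabla_y f(x,y)\|^2\geq 2\mu[\max_{y'}f(x,y')-f(x,y)]$ for all $x,y$; (ii) there is $l>0$ with $\|\nabla_x f(x_1,y_1)-\nabla_x f(x_2,y_2)\|\leq l[\|x_1-x_2\|+\|y_1-y_2\|]$ and $\|\nabla_y f(x_1,y_1)-\nabla_y f(x_2,y_2)\|\leq l[\|x_1-x_2\|+\|y_1-y_2\|]$ for all $x_1,x_2,y_1,y_2$. Let $\Phi(x)=\max_y f(x,y)$ and suppose $\Phi^*=\min_x\Phi(x)$ exists and is finite. Let $\kappa=l/\mu$, $L=l+\frac{l^2}{2\mu}$. Let $\epsilon>0$, $\beta\leq\frac{1}{4d_2L}$, $\alpha\leq\min\{\frac{\beta}{32\kappa^2},\frac{1}{10d_1L}\}$, $\theta_1=\left(5d_1L+\frac{3}{2\alpha}+\frac32L+d_2L\right)d_1^2L^2\alpha^2$, $\mu_1=\frac{\sqrt{\alpha}\,\epsilon}{2\sqrt{\theta_1}}$, $\mu_2=\frac{\sqrt{\alpha}\,\epsilon}{\sqrt{3\beta}\,d_2L}$. Let $(x_t,y_t)_{t\geq0}$ be generated by the ZO-AGDA iteration described in the context from initial point $(x_0,y_0)$, and let $T(\epsilon)=\min\{t:\mathbb{E}\|\nabla\Phi(x_t)\|\leq\epsilon\}$. Then $$T(\epsilon)\leq\frac{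4[3\Phi(x_0)-f(x_0,y_0)-2\Phi^*]}{\alpha\epsilon^2}.$$
   Context: ZO-AGDA iteration: given $(x_t,y_t)$, draw $u_t$ uniformly from the unit sphere in $\mathbb{R}^{d_1}$ and $v_t$ uniformly from the unit sphere in $\mathbb{R}^{d_2}$, independently of everything else, and set $x_{t+1}=x_t-\alpha\,\frac{f(x_t+\mu_1u_t,y_t)-f(x_t,y_t)}{\mu_1/d_1}u_t$, then $y_{t+1}=y_t+\beta\,\frac{f(x_{t+1},y_t+\mu_2v_t)-f(x_{t+1},y_t)}{\mu_2/d_2}v_t$. Expectations are over all random vectors drawn by the algorithm. An $\epsilon$-stationary point is $\hat x$ with $\mathbb{E}\|\nabla\Phi(\hat x)\|\leq\epsilon$. *)

theory Defs
  imports "HOL-Probability.Probability"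
begin

text \<open>Value function Phi(x) = max over y of f(x,y) (the max is assumed attained in the theorem).\<close>
definition Phi :: "('a \<Rightarrow> 'b \<Rightarrow> real) \<Rightarrow> 'a \<Rightarrow> real" where
  "Phi f x = (SUP y. f x y)"

definition grad :: "('a::real_inner \<Rightarrow> real) \<Rightarrow> 'a \<Rightarrow> 'a" where
  "grad g x = (THE D. (g has_derivative (\<lambda>h. D \<bullet> h)) (at x))"

text \<open>Uniform distribution on the unit sphere: radial projection of the uniform
  distribution on the unit ball (i.e. normalized surface measure).\<close>
definition uniform_sphere :: "('a::euclidean_space) measure" where
  "uniform_sphere = distr (uniform_measure lborel (ball 0 1)) borel (\<lambda>x. x /\<^sub>R norm x)"

primrec zo_agda :: "('a::euclidean_space \<Rightarrow> 'b::euclidean_space \<Rightarrow> real) \<Rightarrow> real \<Rightarrow> real \<Rightarrow> real \<Rightarrow> real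
    \<Rightarrow> 'a \<Rightarrow> 'b \<Rightarrow> (nat \<Rightarrow> 'a) \<Rightarrow> (nat \<Rightarrow> 'b) \<Rightarrow> nat \<Rightarrow> 'a \<times> 'b" where
  "zo_agda f \<alpha> \<beta> \<mu>1 \<mu>2 x0 y0 u v 0 = (x0, y0)"
| "zo_agda f \<alpha> \<beta> \<mu>1 \<mu>2 x0 y0 u v (Suc t) =
     (let x = fst (zo_agda f \<alpha> \<beta> \<mu>1 \<mu>2 x0 y0 u v t);
          y = snd (zo_agda f \<alpha> \<beta> \<mu>1 \<mu>2 x0 y0 u v t);
          x' = x - (\<alpha> * ((f (x + \<mu>1 *\<^sub>R u t) y - f x y) / (\<mu>1 / real DIM('a)))) *\<^sub>R u t;
          y' = y + (\<beta> * ((f x' (y + \<mu>2 *\<^sub>R v t) - f x' y) / (\<mu>2 / real DIM('b)))) *\<^sub>R v t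
      in (x', y'))"

end

theory Submission
  imports Defs
begin

lemma grad_unique:
  fixes g :: "'a::real_inner \<Rightarrow> real"
  assumes "(g has_derivative (\<lambda>h. D \<bullet> h)) (at x)"
  shows "grad g x = D"
proof -
  have uniq: "D' = D" if "(g has_derivative (\<lambda>h. D' \<bullet> h)) (at x)" for D'
  proof -
    have "(\<lambda>h. D' \<bullet> h) = (\<lambda>h. D \<bullet> h)" using has_derivative_unique[OF that assms] .
    then have "D' \<bullet> (D' - D) = D \<bullet> (D' - D)" by metis
    then have "(D' - D) \<bullet> (D' - D) = 0" by (simp add: inner_diff_left)
    then show ?thesis by simp
  qed
  show ?thesis unfolding grad_def
    using assms uniq by (rule the_equality)
qed

lemma grad_works:
  fixes g :: "'a::euclidean_space \<Rightarrow> real"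
  assumes "g differentiable (at x)"
  shows "(g has_derivative (\<lambda>h. grad g x \<bullet> h)) (at x)"
proof -
  obtain g' where g': "(g has_derivative g') (at x)" using assms by (auto simp: differentiable_def)
  then have lin: "linear g'" using has_derivative_linear by blast
  define D where "D = (\<Sum>b\<in>Basis. g' b *\<^sub>R b)"
  have eq: "g' h = D \<bullet> h" for h
  proof -
    have "g' h = g' (\<Sum>b\<in>Basis. (h \<bullet> b) *\<^sub>R b)" by (simp add: euclidean_representation)
    also have "\<dots> = (\<Sum>b\<in>Basis. (h \<bullet> b) * g' b)"
      using lin by (simp add: linear_sum linear_scale)
    also have "\<dots> = D \<bullet> h" by (simp add: D_def inner_sum_left inner_sum_right mult.commute inner_commute)
    finally show ?thesis .
  qed
  have "(g has_derivative (\<lambda>h. D \<bullet> h)) (at x)"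
    using g' eq by (metis (no_types, lifting) ext)
  then show ?thesis using grad_unique by metis
qed

lemma line_deriv:
  fixes g :: "'a::real_inner \<Rightarrow> real"
  assumes der: "\<And>z. (g has_derivative (\<lambda>h. D z \<bullet> h)) (at z)"
  shows "((\<lambda>t. g (x + t *\<^sub>R d)) has_real_derivative (D (x + t *\<^sub>R d) \<bullet> d)) (at t)"
proof -
  have 1: "((\<lambda>t. x + t *\<^sub>R d) has_derivative (\<lambda>s. s *\<^sub>R d)) (at t)"
    by (auto intro!: derivative_eq_intros)
  have "((\<lambda>t. g (x + t *\<^sub>R d)) has_derivative (\<lambda>s. D (x + t *\<^sub>R d) \<bullet> (s *\<^sub>R d))) (at t)"
    using diff_chain_at[OF 1 der[of "x + t *\<^sub>R d"]] by (simp add: o_def)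
  then show ?thesis
    by (rule has_derivative_imp_has_field_derivative) (simp add: mult.commute)
qed

lemma quad_bounds:
  fixes g :: "'a::real_inner \<Rightarrow> real"
  assumes der: "\<And>z. (g has_derivative (\<lambda>h. D z \<bullet> h)) (at z)"
    and lip: "\<And>z w. norm (D z - D w) \<le> c * norm (z - w)"
  shows "g (x + d) \<le> g x + D x \<bullet> d + c / 2 * (norm d)\<^sup>2"
    and "g (x + d) \<ge> g x + D x \<bullet> d - c / 2 * (norm d)\<^sup>2"
proof -
  have key: "\<bar>D (x + t *\<^sub>R d) \<bullet> d - D x \<bullet> d\<bar> \<le> c * t * (norm d)\<^sup>2" if "0 \<le> t" for t
  proof -
    have "\<bar>D (x + t *\<^sub>R d) \<bullet> d - D x \<bullet> d\<bar> = \<bar>(D (x + t *\<^sub>R d) - D x) \<bullet> d\<bar>"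
      by (simp add: inner_diff_left)
    also have "\<dots> \<le> norm (D (x + t *\<^sub>R d) - D x) * norm d" by (rule Cauchy_Schwarz_ineq2)
    also have "\<dots> \<le> (c * norm (t *\<^sub>R d)) * norm d"
      using lip[of "x + t *\<^sub>R d" x] by (intro mult_right_mono) auto
    also have "\<dots> = c * t * (norm d)\<^sup>2" using that by (simp add: power2_eq_square)
    finally show ?thesis .
  qed
  define \<phi> where "\<phi> t = g (x + t *\<^sub>R d) - t * (D x \<bullet> d) - c / 2 * t\<^sup>2 * (norm d)\<^sup>2" for t
  define \<psi> where "\<psi> t = g (x + t *\<^sub>R d) - t * (D x \<bullet> d) + c / 2 * t\<^sup>2 * (norm d)\<^sup>2" for t
  have d\<phi>: "(\<phi> has_real_derivative (D (x + t *\<^sub>R d) \<bullet> d - D x \<bullet> d - c * t * (norm d)\<^sup>2)) (at t)" for t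
    unfolding \<phi>_def[abs_def]
    by (rule derivative_eq_intros line_deriv[OF der] refl)+ (simp add: power2_eq_square algebra_simps)
  have d\<psi>: "(\<psi> has_real_derivative (D (x + t *\<^sub>R d) \<bullet> d - D x \<bullet> d + c * t * (norm d)\<^sup>2)) (at t)" for t
    unfolding \<psi>_def[abs_def]
    by (rule derivative_eq_intros line_deriv[OF der] refl)+ (simp add: power2_eq_square algebra_simps)
  have "\<phi> 1 \<le> \<phi> 0"
    by (rule DERIV_nonpos_imp_nonincreasing[of 0 1]) (use d\<phi> key in \<open>force simp: abs_le_iff\<close>)+
  then show "g (x + d) \<le> g x + D x \<bullet> d + c / 2 * (norm d)\<^sup>2" by (simp add: \<phi>_def)
  have "\<psi> 0 \<le> \<psi> 1"
    by (rule DERIV_nonneg_imp_nondecreasing[of 0 1]) (use d\<psi> key in \<open>force simp: abs_le_iff\<close>)+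
  then show "g (x + d) \<ge> g x + D x \<bullet> d - c / 2 * (norm d)\<^sup>2" by (simp add: \<psi>_def)
qed

lemma has_derivative_from_quad:
  fixes g :: "'a::real_inner \<Rightarrow> real"
  assumes "\<And>d. \<bar>g (x + d) - g x - G \<bullet> d\<bar> \<le> C * (norm d)\<^sup>2"
  shows "(g has_derivative (\<lambda>h. G \<bullet> h)) (at x)"
  unfolding has_derivative_at
proof (intro conjI)
  show "bounded_linear ((\<bullet>) G)" by (rule bounded_linear_inner_right)
  have "((\<lambda>h. norm h) \<longlongrightarrow> 0) (at (0::'a))"
    by (rule tendsto_norm_zero[OF tendsto_ident_at])
  then have lim: "((\<lambda>h. C * norm h) \<longlongrightarrow> 0) (at (0::'a))" by (rule tendsto_mult_right_zero)
  show "(\<lambda>h. norm (g (x + h) - g x - G \<bullet> h) / norm h) \<midarrow>0\<rightarrow> 0"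
  proof (rule Lim_null_comparison[OF _ lim])
    show "\<forall>\<^sub>F h in at 0. norm (norm (g (x + h) - g x - G \<bullet> h) / norm h) \<le> C * norm h"
    proof (rule always_eventually, rule allI)
      fix h :: 'a
      show "norm (norm (g (x + h) - g x - G \<bullet> h) / norm h) \<le> C * norm h"
      proof (cases "h = 0")
        case True then show ?thesis by simp
      next
        case False
        then have np: "norm h > 0" by simp
        have "\<bar>g (x + h) - g x - G \<bullet> h\<bar> \<le> C * (norm h)\<^sup>2" by (rule assms)
        then show ?thesis
          using np by (simp add: divide_le_eq power2_eq_square mult.assoc)
      qed
    qed
  qed
qed

locale minimax =
  fixes f :: "'a::euclidean_space \<Rightarrow> 'b::euclidean_space \<Rightarrow> real" and \<mu> l :: real
  assumes dx: "\<forall>x y. (\<lambda>x'. f x' y) differentiable (at x)"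
    and dy: "\<forall>x y. (f x) differentiable (at y)"
    and max_attained: "\<forall>x. \<exists>y. \<forall>y'. f x y' \<le> f x y"
    and mu_pos: "0 < \<mu>"
    and PL: "\<forall>x y. (norm (grad (f x) y))\<^sup>2 \<ge> 2 * \<mu> * (Phi f x - f x y)"
    and l_pos: "0 < l"
    and lip_x: "\<forall>x1 x2 y1 y2. norm (grad (\<lambda>x. f x y1) x1 - grad (\<lambda>x. f x y2) x2)
                   \<le> l * (norm (x1 - x2) + norm (y1 - y2))"
    and lip_y: "\<forall>x1 x2 y1 y2. norm (grad (f x1) y1 - grad (f x2) y2)
                   \<le> l * (norm (x1 - x2) + norm (y1 - y2))"
begin

definition fx where "fx x y = grad (\<lambda>x. f x y) x"
definition fy where "fy x y = grad (f x) y"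
definition ys where "ys x = (SOME y. \<forall>y'. f x y' \<le> f x y)"
abbreviation \<Phi> where "\<Phi> \<equiv> Phi f"

lemma fx_der: "((\<lambda>x. f x y) has_derivative (\<lambda>h. fx x y \<bullet> h)) (at x)"
  unfolding fx_def using dx grad_works by blast

lemma fy_der: "(f x has_derivative (\<lambda>h. fy x y \<bullet> h)) (at y)"
  unfolding fy_def using dy grad_works by blast

lemma fx_lip: "norm (fx x1 y1 - fx x2 y2) \<le> l * (norm (x1 - x2) + norm (y1 - y2))"
  unfolding fx_def using lip_x by blast

lemma fy_lip: "norm (fy x1 y1 - fy x2 y2) \<le> l * (norm (x1 - x2) + norm (y1 - y2))"
  unfolding fy_def using lip_y by blast

lemma quad_x:
  shows "f (x + d) y \<le> f x y + fx x y \<bullet> d + l / 2 * (norm d)\<^sup>2"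
    and "f (x + d) y \<ge> f x y + fx x y \<bullet> d - l / 2 * (norm d)\<^sup>2"
  using quad_bounds[where g="\<lambda>x. f x y" and D="\<lambda>x. fx x y" and c=l, OF fx_der]
    fx_lip[of _ y _ y] by auto

lemma quad_y:
  shows "f x (y + d) \<le> f x y + fy x y \<bullet> d + l / 2 * (norm d)\<^sup>2"
    and "f x (y + d) \<ge> f x y + fy x y \<bullet> d - l / 2 * (norm d)\<^sup>2"
  using quad_bounds[where g="f x" and D="fy x" and c=l, OF fy_der]
    fy_lip[of x _ x] by auto

lemma ys_max: "f x y' \<le> f x (ys x)"
  unfolding ys_def using someI_ex[OF max_attained[rule_format, of x]] by blast

lemma Phi_eq: "\<Phi> x = f x (ys x)"
  unfolding Phi_def
  by (rule cSup_eq_maximum) (auto intro: ys_max)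

lemma Phi_ge: "f x y \<le> \<Phi> x"
  using Phi_eq ys_max by simp

lemma Phi_eq_max: assumes "\<forall>y'. f x y' \<le> f x y" shows "\<Phi> x = f x y"
  using Phi_ge assms by (metis Phi_eq ys_max antisym)

lemma PL': "\<Phi> x - f x y \<le> (norm (fy x y))\<^sup>2 / (2 * \<mu>)"
  using PL mu_pos unfolding fy_def by (simp add: pos_le_divide_eq mult.commute)

lemma gap_lower: "(norm (fy x y))\<^sup>2 / (2 * l) \<le> \<Phi> x - f x y"
proof -
  have "f x (y + (1/l) *\<^sub>R fy x y) \<ge> f x y + fy x y \<bullet> ((1/l) *\<^sub>R fy x y) - l / 2 * (norm ((1/l) *\<^sub>R fy x y))\<^sup>2"
    by (rule quad_y)
  moreover have "fy x y \<bullet> ((1/l) *\<^sub>R fy x y) = (norm (fy x y))\<^sup>2 / l"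
    by (simp add: power2_norm_eq_inner)
  moreover have "l / 2 * (norm ((1/l) *\<^sub>R fy x y))\<^sup>2 = (norm (fy x y))\<^sup>2 / (2 * l)"
    using l_pos by (simp add: power2_eq_square field_simps)
  moreover have "f x (y + (1/l) *\<^sub>R fy x y) \<le> \<Phi> x" by (rule Phi_ge)
  moreover have "(norm (fy x y))\<^sup>2 / l - (norm (fy x y))\<^sup>2 / (2 * l) = (norm (fy x y))\<^sup>2 / (2 * l)"
    using l_pos by (simp add: field_simps)
  ultimately show ?thesis by linarith
qed

lemma fy_max_zero: assumes "\<forall>y'. f x y' \<le> f x y" shows "fy x y = 0"
proof -
  have "(\<lambda>h. fy x y \<bullet> h) = (\<lambda>v. 0)"
    by (rule differential_zero_maxmin[of y UNIV, OF _ _ fy_der]) (use assms in auto)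
  then have "fy x y \<bullet> fy x y = 0" by metis
  then show ?thesis by simp
qed

lemma fy_ys: "fy x (ys x) = 0"
  using fy_max_zero ys_max by blast

definition G where "G x = fx x (ys x)"

lemma Phi_lower: "\<Phi> (x + d) \<ge> \<Phi> x + G x \<bullet> d - l / 2 * (norm d)\<^sup>2"
  using quad_x(2)[of x "ys x" d] Phi_ge[of "x + d" "ys x"] Phi_eq[of x] unfolding G_def by linarith

lemma Phi_upper: "\<Phi> (x + d) \<le> \<Phi> x + G x \<bullet> d + (l / 2 + l\<^sup>2 / (2 * \<mu>)) * (norm d)\<^sup>2"
proof -
  have "\<Phi> (x + d) - f (x + d) (ys x) \<le> (norm (fy (x + d) (ys x)))\<^sup>2 / (2 * \<mu>)" by (rule PL')
  moreover have "norm (fy (x + d) (ys x)) \<le> l * norm d"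
    using fy_lip[of "x + d" "ys x" x "ys x"] fy_ys[of x] by simp
  then have "(norm (fy (x + d) (ys x)))\<^sup>2 \<le> (l * norm d)\<^sup>2"
    by (intro power_mono) auto
  then have "(norm (fy (x + d) (ys x)))\<^sup>2 / (2 * \<mu>) \<le> (l * norm d)\<^sup>2 / (2 * \<mu>)"
    using mu_pos by (intro divide_right_mono) auto
  moreover have "(l * norm d)\<^sup>2 / (2 * \<mu>) = l\<^sup>2 / (2 * \<mu>) * (norm d)\<^sup>2"
    by (simp add: power_mult_distrib)
  moreover have "f (x + d) (ys x) \<le> f x (ys x) + fx x (ys x) \<bullet> d + l / 2 * (norm d)\<^sup>2" by (rule quad_x)
  ultimately show ?thesis using Phi_eq[of x] unfolding G_def by (simp add: algebra_simps)
qed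

lemma Phi_quad: "\<bar>\<Phi> (x + d) - \<Phi> x - G x \<bullet> d\<bar> \<le> (l / 2 + l\<^sup>2 / (2 * \<mu>)) * (norm d)\<^sup>2"
proof -
  have "0 \<le> l\<^sup>2 / (2 * \<mu>) * (norm d)\<^sup>2" using mu_pos by simp
  then show ?thesis using Phi_lower[of x d] Phi_upper[of x d] by (simp add: abs_le_iff algebra_simps)
qed

lemma Phi_der: "(\<Phi> has_derivative (\<lambda>h. G x \<bullet> h)) (at x)"
  by (rule has_derivative_from_quad[OF Phi_quad])

lemma grad_Phi: "grad \<Phi> x = G x"
  by (rule grad_unique[OF Phi_der])

lemma e_bound: "(norm (fx x y - grad \<Phi> x))\<^sup>2 \<le> 4 * (l + l\<^sup>2 / (2 * \<mu>)) * (\<Phi> x - f x y)"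
proof -
  define L where "L = l + l\<^sup>2 / (2 * \<mu>)"
  have Lpos: "L > 0" unfolding L_def using l_pos mu_pos by (simp add: add_pos_nonneg)
  define e where "e = fx x y - G x"
  define d where "d = (1 / (2 * L)) *\<^sub>R e"
  have "\<Phi> (x + d) \<ge> f (x + d) y" by (rule Phi_ge)
  moreover have "f (x + d) y \<ge> f x y + fx x y \<bullet> d - l / 2 * (norm d)\<^sup>2" by (rule quad_x)
  moreover have "\<Phi> (x + d) \<le> \<Phi> x + G x \<bullet> d + (l / 2 + l\<^sup>2 / (2 * \<mu>)) * (norm d)\<^sup>2" by (rule Phi_upper)
  ultimately have "e \<bullet> d \<le> (\<Phi> x - f x y) + L * (norm d)\<^sup>2"
    unfolding e_def L_def by (simp add: inner_diff_left algebra_simps)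
  moreover have "e \<bullet> d = (norm e)\<^sup>2 / (2 * L)" unfolding d_def by (simp add: power2_norm_eq_inner)
  moreover have "L * (norm d)\<^sup>2 = (norm e)\<^sup>2 / (4 * L)"
    unfolding d_def using Lpos by (simp add: power2_eq_square field_simps)
  ultimately have "(norm e)\<^sup>2 / (4 * L) \<le> \<Phi> x - f x y" by (simp add: field_simps)
  then show ?thesis using Lpos unfolding e_def grad_Phi L_def[symmetric]
    by (simp add: divide_le_eq mult.commute)
qed

lemma mu_gt_l: assumes "l < \<mu>" shows "\<Phi> x = f x y"
proof -
  have a: "(norm (fy x y))\<^sup>2 / (2 * l) \<le> (norm (fy x y))\<^sup>2 / (2 * \<mu>)"
    using gap_lower PL' order_trans by blast
  have "(norm (fy x y))\<^sup>2 = 0"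
  proof (rule ccontr)
    assume "(norm (fy x y))\<^sup>2 \<noteq> 0"
    then have "(norm (fy x y))\<^sup>2 > 0" by simp
    then have "(norm (fy x y))\<^sup>2 / (2 * \<mu>) < (norm (fy x y))\<^sup>2 / (2 * l)"
      using assms l_pos by (intro divide_strict_left_mono) auto
    then show False using a by simp
  qed
  then show ?thesis using PL'[of x y] Phi_ge[of x y] by simp
qed

lemma f_quad2:
  "\<bar>f (x + d) (y + s) - f x y - (fx x y, fy x y) \<bullet> (d, s)\<bar> \<le> l * (norm (d, s))\<^sup>2"
proof -
  have 1: "\<bar>f (x + d) (y + s) - f (x + d) y - fy (x + d) y \<bullet> s\<bar> \<le> l / 2 * (norm s)\<^sup>2"
    using quad_y[of "x + d" y s] unfolding abs_le_iff by linarith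
  have 2: "\<bar>(fy (x + d) y - fy x y) \<bullet> s\<bar> \<le> l * norm d * norm s"
  proof -
    have "\<bar>(fy (x + d) y - fy x y) \<bullet> s\<bar> \<le> norm (fy (x + d) y - fy x y) * norm s"
      by (rule Cauchy_Schwarz_ineq2)
    also have "\<dots> \<le> (l * norm d) * norm s"
      using fy_lip[of "x + d" y x y] by (intro mult_right_mono) auto
    finally show ?thesis by simp
  qed
  have 3: "\<bar>f (x + d) y - f x y - fx x y \<bullet> d\<bar> \<le> l / 2 * (norm d)\<^sup>2"
    using quad_x[where x=x and d=d and y=y] unfolding abs_le_iff by linarith
  have 4: "l * norm d * norm s \<le> l / 2 * (norm d)\<^sup>2 + l / 2 * (norm s)\<^sup>2"
  proof -
    have "0 \<le> l / 2 * (norm d - norm s)\<^sup>2" using l_pos by simp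
    then show ?thesis by (simp add: power2_eq_square algebra_simps)
  qed
  define A where "A = f (x + d) (y + s) - f (x + d) y - fy (x + d) y \<bullet> s"
  define B where "B = (fy (x + d) y - fy x y) \<bullet> s"
  define C where "C = f (x + d) y - f x y - fx x y \<bullet> d"
  have "f (x + d) (y + s) - f x y - (fx x y, fy x y) \<bullet> (d, s) = A + B + C"
    unfolding A_def B_def C_def by (simp add: inner_diff_left)
  moreover have "\<bar>A + B + C\<bar> \<le> \<bar>A\<bar> + \<bar>B\<bar> + \<bar>C\<bar>"
    using abs_triangle_ineq[of "A + B" C] abs_triangle_ineq[of A B] by linarith
  ultimately have "\<bar>f (x + d) (y + s) - f x y - (fx x y, fy x y) \<bullet> (d, s)\<bar> \<le> l * ((norm d)\<^sup>2 + (norm s)\<^sup>2)"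
    using 1 2 3 4 unfolding A_def[symmetric] B_def[symmetric] C_def[symmetric] by (simp add: algebra_simps)
  also have "(norm d)\<^sup>2 + (norm s)\<^sup>2 = (norm (d, s))\<^sup>2" by (simp add: norm_Pair)
  finally show ?thesis .
qed

lemma f_cont: "continuous_on UNIV (\<lambda>p. f (fst p) (snd p))"
proof -
  have "((\<lambda>p. f (fst p) (snd p)) has_derivative (\<lambda>h. (fx (fst p) (snd p), fy (fst p) (snd p)) \<bullet> h)) (at p)" for p
    by (rule has_derivative_from_quad) (use f_quad2 in \<open>auto simp: case_prod_beta\<close>)
  then show ?thesis
    by (intro continuous_at_imp_continuous_on ballI has_derivative_continuous) blast
qed

lemma Phi_cont: "continuous_on UNIV \<Phi>"
  by (intro continuous_at_imp_continuous_on ballI has_derivative_continuous) (rule Phi_der)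

lemma G_lip: "norm (G x - G z) \<le> 6 * (l / 2 + l\<^sup>2 / (2 * \<mu>)) * norm (x - z)"
proof (cases "G x = G z")
  case True then show ?thesis using l_pos mu_pos by simp
next
  case False
  define C where "C = l / 2 + l\<^sup>2 / (2 * \<mu>)"
  have C0: "C \<ge> 0" unfolding C_def using l_pos mu_pos by simp
  define v where "v = G x - G z"
  define w where "w = z - x"
  have vnz: "norm v > 0" using False unfolding v_def by simp
  define d where "d = (norm w / norm v) *\<^sub>R v"
  have nd: "norm d = norm w" unfolding d_def using vnz by simp
  have q1: "\<bar>\<Phi> (x + (w + d)) - \<Phi> x - G x \<bullet> (w + d)\<bar> \<le> C * (norm (w + d))\<^sup>2"
    using Phi_quad unfolding C_def by blast
  have q2: "\<bar>\<Phi> (z + d) - \<Phi> z - G z \<bullet> d\<bar> \<le> C * (norm d)\<^sup>2"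
    using Phi_quad unfolding C_def by blast
  have q3: "\<bar>\<Phi> (x + w) - \<Phi> x - G x \<bullet> w\<bar> \<le> C * (norm w)\<^sup>2"
    using Phi_quad unfolding C_def by blast
  have zz: "x + (w + d) = z + d" "x + w = z" unfolding w_def by auto
  have "(norm (w + d))\<^sup>2 \<le> (norm w + norm d)\<^sup>2"
    by (intro power_mono norm_triangle_ineq) auto
  also have "\<dots> = 4 * (norm w)\<^sup>2" using nd by (simp add: power2_eq_square)
  finally have nwd: "(norm (w + d))\<^sup>2 \<le> 4 * (norm w)\<^sup>2" .
  have "v \<bullet> d = norm v * norm w" unfolding d_def using vnz
    by (simp add: power2_norm_eq_inner[symmetric] power2_eq_square)
  moreover have "v \<bullet> d = G x \<bullet> (w + d) - G x \<bullet> w - G z \<bullet> d"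
    unfolding v_def by (simp add: inner_diff_left inner_add_right)
  ultimately have "norm v * norm w \<le> C * (norm (w + d))\<^sup>2 + C * (norm d)\<^sup>2 + C * (norm w)\<^sup>2"
    using q1 q2 q3 unfolding zz abs_le_iff by linarith
  also have "\<dots> \<le> C * (4 * (norm w)\<^sup>2) + C * (norm w)\<^sup>2 + C * (norm w)\<^sup>2"
    using mult_left_mono[OF nwd C0] nd by simp
  also have "\<dots> = (6 * C * norm w) * norm w" by (simp add: power2_eq_square)
  finally have "norm v * norm w \<le> (6 * C * norm w) * norm w" .
  moreover have "norm w > 0"
    using False unfolding w_def by auto
  ultimately have "norm v \<le> 6 * C * norm w" by simp
  then show ?thesis unfolding v_def w_def C_def by (simp add: norm_minus_commute)
qed

lemma G_cont: "continuous_on UNIV G"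
proof -
  have "lipschitz_on (6 * (l / 2 + l\<^sup>2 / (2 * \<mu>))) UNIV G"
    using G_lip l_pos mu_pos by (intro lipschitz_onI) (auto simp: dist_norm)
  then show ?thesis by (rule lipschitz_on_continuous_on)
qed

end

definition sw :: "'n \<Rightarrow> 'n \<Rightarrow> 'n \<Rightarrow> 'n" where
  "sw i j k = (if k = i then j else if k = j then i else k)"

definition swp :: "'n::finite \<Rightarrow> 'n \<Rightarrow> real^'n \<Rightarrow> real^'n" where
  "swp i j x = (\<chi> k. x $ sw i j k)"

definition rfl :: "'n::finite \<Rightarrow> real^'n \<Rightarrow> real^'n" where
  "rfl i x = (\<chi> k. (if k = i then -1 else 1) * x $ k)"

lemma sw_sw[simp]: "sw i j (sw i j k) = k" by (auto simp: sw_def)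

lemma bij_sw: "bij (sw i j)"
  by (metis bijI' sw_sw)

lemma prod_Basis_cart: "(\<Prod>b\<in>(Basis::(real^'n::finite) set). h b) = (\<Prod>i\<in>UNIV. h (axis i 1))"
proof -
  have B: "(Basis::(real^'n) set) = range (\<lambda>i. axis i 1)"
    unfolding Basis_vec_def by auto
  have "inj (\<lambda>i::'n. axis i (1::real))" by (auto intro!: injI simp: axis_eq_axis)
  then show ?thesis unfolding B by (simp add: prod.reindex)
qed

lemma swp_meas: "swp i j \<in> borel_measurable borel"
proof -
  have "continuous_on UNIV (swp i j)" unfolding swp_def
    by (intro continuous_on_vec_lambda continuous_on_component continuous_on_id)
  then show ?thesis by (rule borel_measurable_continuous_onI)
qed

lemma rfl_meas: "rfl i \<in> borel_measurable borel"
proof -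
  have "continuous_on UNIV (rfl i)" unfolding rfl_def
    by (intro continuous_on_vec_lambda continuous_on_mult_left continuous_on_component continuous_on_id)
  then show ?thesis by (rule borel_measurable_continuous_onI)
qed

lemma lborel_swp: "distr lborel borel (swp i j) = (lborel :: (real^'n::finite) measure)"
proof (rule lborel_eqI[symmetric])
  fix l u :: "real^'n" assume le: "\<And>b. b \<in> Basis \<Longrightarrow> l \<bullet> b \<le> u \<bullet> b"
  have pre: "swp i j -` box l u = box (swp i j l) (swp i j u)"
  proof -
    have "(\<forall>k. l$k < x$sw i j k \<and> x$sw i j k < u$k) \<longleftrightarrow> (\<forall>k. l$sw i j k < x$k \<and> x$k < u$sw i j k)" for x
      by (metis sw_sw)
    then show ?thesis by (auto simp: mem_box_cart swp_def)
  qed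
  have le2: "l $ k \<le> u $ k" for k using le[of "axis k 1"] by (auto simp: Basis_vec_def inner_axis)
  have le': "\<forall>b\<in>Basis. swp i j l \<bullet> b \<le> swp i j u \<bullet> b"
    using le2 by (auto simp: Basis_vec_def inner_axis swp_def)
  have "emeasure (distr lborel borel (swp i j)) (box l u) = emeasure lborel (swp i j -` box l u)"
    by (subst emeasure_distr) (simp_all add: swp_meas)
  also have "\<dots> = (\<Prod>b\<in>Basis. (swp i j u - swp i j l) \<bullet> b)"
    unfolding pre emeasure_lborel_box_eq using le' by simp
  also have "\<dots> = (\<Prod>k\<in>UNIV. (u - l) $ sw i j k)"
    unfolding prod_Basis_cart by (simp add: inner_axis swp_def)
  also have "\<dots> = (\<Prod>k\<in>UNIV. (u - l) $ k)"
    using prod.reindex_bij_betw[of "sw i j" UNIV UNIV "\<lambda>k. (u - l) $ k"] bij_sw[of i j] by simp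
  also have "\<dots> = (\<Prod>b\<in>Basis. (u - l) \<bullet> b)"
    unfolding prod_Basis_cart by (simp add: inner_axis)
  finally show "emeasure (distr lborel borel (swp i j)) (box l u) = (\<Prod>b\<in>Basis. (u - l) \<bullet> b)" .
qed simp

lemma lborel_rfl: "distr lborel borel (rfl i) = (lborel :: (real^'n::finite) measure)"
proof (rule lborel_eqI[symmetric])
  fix l u :: "real^'n" assume le: "\<And>b. b \<in> Basis \<Longrightarrow> l \<bullet> b \<le> u \<bullet> b"
  have le2: "l $ k \<le> u $ k" for k using le[of "axis k 1"] by (auto simp: Basis_vec_def inner_axis)
  define l' where "l' = (\<chi> k. if k = i then - u $ k else l $ k)"
  define u' where "u' = (\<chi> k. if k = i then - l $ k else u $ k)"
  have pre: "rfl i -` box l u = box l' u'"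
  proof -
    have "(l $ k < (if k = i then -1 else 1) * x $ k \<and> (if k = i then -1 else 1) * x $ k < u $ k) \<longleftrightarrow>
          (l' $ k < x $ k \<and> x $ k < u' $ k)" for x k
      by (auto simp: l'_def u'_def)
    then show ?thesis by (auto simp: mem_box_cart rfl_def)
  qed
  have le': "\<forall>b\<in>Basis. l' \<bullet> b \<le> u' \<bullet> b"
    using le2 by (auto simp: Basis_vec_def inner_axis l'_def u'_def)
  have eq: "u' - l' = u - l" by (simp add: vec_eq_iff u'_def l'_def)
  have "emeasure (distr lborel borel (rfl i)) (box l u) = emeasure lborel (rfl i -` box l u)"
    by (subst emeasure_distr) (simp_all add: rfl_meas)
  also have "\<dots> = (\<Prod>b\<in>Basis. (u - l) \<bullet> b)"
    unfolding pre emeasure_lborel_box_eq using le' eq by simp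
  finally show "emeasure (distr lborel borel (rfl i)) (box l u) = (\<Prod>b\<in>Basis. (u - l) \<bullet> b)" .
qed simp

lemma norm_swp: "norm (swp i j x) = norm x"
proof -
  have "swp i j x \<bullet> swp i j x = x \<bullet> x"
    unfolding inner_vec_def swp_def
    using sum.reindex_bij_betw[of "sw i j" UNIV UNIV "\<lambda>k. x $ k \<bullet> x $ k"] bij_sw[of i j] by simp
  then show ?thesis by (simp add: norm_eq_sqrt_inner)
qed

lemma norm_rfl: "norm (rfl i x) = norm x"
proof -
  have "rfl i x \<bullet> rfl i x = x \<bullet> x"
    unfolding inner_vec_def rfl_def by (intro sum.cong) auto
  then show ?thesis by (simp add: norm_eq_sqrt_inner)
qed

lemma swp_scale: "swp i j (c *\<^sub>R x) = c *\<^sub>R swp i j x" by (simp add: swp_def vec_eq_iff)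
lemma rfl_scale: "rfl i (c *\<^sub>R x) = c *\<^sub>R rfl i x" by (simp add: rfl_def vec_eq_iff)

lemma ball_pos: "emeasure lborel (ball (0::'a::euclidean_space) 1) \<noteq> 0"
proof -
  have "emeasure lborel (ball (0::'a) 1) = ennreal (measure lborel (ball (0::'a) 1))"
    using emeasure_lborel_ball_finite[of "0::'a" 1] by (simp add: emeasure_eq_ennreal_measure)
  then show ?thesis using content_ball_pos[of 1 "0::'a"] by simp
qed

lemma ball_fin: "emeasure lborel (ball (0::'a::euclidean_space) 1) \<noteq> \<infinity>"
  using emeasure_lborel_ball_finite[of "0::'a" 1] by simp

abbreviation UB where "UB \<equiv> uniform_measure lborel (ball (0::'a::euclidean_space) 1)"
definition NN :: "'a::euclidean_space \<Rightarrow> 'a" where "NN x = x /\<^sub>R norm x"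

lemma NN_meas: "NN \<in> borel_measurable borel" unfolding NN_def by measurable

lemma sphere_eq: "uniform_sphere = distr UB borel NN"
  unfolding uniform_sphere_def NN_def ..

lemma prob_UB: "prob_space (UB :: 'a::euclidean_space measure)"
  by (rule prob_space_uniform_measure[OF ball_pos ball_fin])

lemma NN_meas_UB: "NN \<in> measurable (UB :: 'a::euclidean_space measure) borel"
  using NN_meas by (simp add: measurable_cong_sets[OF sets_uniform_measure refl])

lemma prob_sphere: "prob_space (uniform_sphere :: 'a::euclidean_space measure)"
  unfolding sphere_eq by (rule prob_space.prob_space_distr[OF prob_UB NN_meas_UB])


lemma UB_inv:
  fixes T :: "'a::euclidean_space \<Rightarrow> 'a"
  assumes Tm: "T \<in> borel_measurable borel" and Tl: "distr lborel borel T = lborel"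
    and Tn: "\<And>x. norm (T x) = norm x"
  shows "distr UB borel T = UB"
proof (rule measure_eqI)
  show "sets (distr UB borel T) = sets UB" by simp
  fix A assume "A \<in> sets (distr UB borel T)"
  then have A: "A \<in> sets borel" by simp
  have TA: "T -` A \<in> sets borel" using Tm A by (simp add: measurable_sets_borel)
  have TmU: "T \<in> measurable UB borel"
    using Tm by (simp add: measurable_cong_sets[OF sets_uniform_measure refl])
  have pre: "ball 0 1 \<inter> T -` A = T -` (ball 0 1 \<inter> A)" using Tn by auto
  have "emeasure (distr UB borel T) A = emeasure UB (T -` A)"
    using TmU A by (simp add: emeasure_distr)
  also have "\<dots> = emeasure lborel (ball 0 1 \<inter> T -` A) / emeasure lborel (ball (0::'a) 1)"
    using TA by (subst emeasure_uniform_measure) auto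
  also have "emeasure lborel (ball 0 1 \<inter> T -` A) = emeasure (distr lborel borel T) (ball 0 1 \<inter> A)"
    unfolding pre using Tm A by (subst emeasure_distr) auto
  also have "\<dots> = emeasure lborel (ball 0 1 \<inter> A)" unfolding Tl ..
  also have "emeasure lborel (ball 0 1 \<inter> A) / emeasure lborel (ball (0::'a) 1) = emeasure UB A"
    using A by (subst emeasure_uniform_measure) auto
  finally show "emeasure (distr UB borel T) A = emeasure UB A" .
qed

lemma sphere_inv:
  fixes T :: "'a::euclidean_space \<Rightarrow> 'a"
  assumes Tm: "T \<in> borel_measurable borel" and Tl: "distr lborel borel T = lborel"
    and Tn: "\<And>x. norm (T x) = norm x" and Ts: "\<And>c x. T (c *\<^sub>R x) = c *\<^sub>R T x"
  shows "distr uniform_sphere borel T = uniform_sphere"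
proof -
  have TmU: "T \<in> measurable UB borel"
    using Tm by (simp add: measurable_cong_sets[OF sets_uniform_measure refl])
  have comm: "T \<circ> NN = NN \<circ> T" by (rule ext) (simp add: NN_def Ts Tn)
  have "distr uniform_sphere borel T = distr UB borel (T \<circ> NN)"
    unfolding sphere_eq by (rule distr_distr[OF Tm NN_meas_UB])
  also have "\<dots> = distr UB borel (NN \<circ> T)" unfolding comm ..
  also have "\<dots> = distr (distr UB borel T) borel NN"
    by (rule distr_distr[symmetric, OF NN_meas TmU])
  also have "\<dots> = uniform_sphere" unfolding UB_inv[OF Tm Tl Tn] sphere_eq ..
  finally show ?thesis .
qed

lemma sets_sphere[simp]: "sets (uniform_sphere :: 'a::euclidean_space measure) = sets borel"
  unfolding uniform_sphere_def by simp

lemma space_sphere[simp]: "space (uniform_sphere :: 'a::euclidean_space measure) = UNIV"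
  unfolding uniform_sphere_def by simp

lemma AE_sphere: "AE u in (uniform_sphere :: 'a::euclidean_space measure). norm u = 1"
proof -
  have "AE x in lborel. x \<noteq> (0::'a)"
    by (rule AE_I'[of "{0}"]) (auto simp: null_sets_def)
  then have "AE x in UB. x \<noteq> (0::'a)"
    by (intro AE_uniform_measureI) auto
  then have "AE x in UB. norm (NN (x::'a)) = (1::real)"
    by eventually_elim (simp add: NN_def)
  then show ?thesis unfolding sphere_eq
    by (subst AE_distr_iff[OF NN_meas_UB]) auto
qed


lemma sph_integrable:
  fixes g :: "'a::euclidean_space \<Rightarrow> real"
  assumes "g \<in> borel_measurable borel" "\<And>u. norm u = 1 \<Longrightarrow> \<bar>g u\<bar> \<le> C"
  shows "integrable uniform_sphere g"
proof -
  interpret S: prob_space "uniform_sphere :: 'a measure" by (rule prob_sphere)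
  show ?thesis
  proof (rule S.integrable_const_bound[where B=C])
    show "AE x in uniform_sphere. norm (g x) \<le> C"
      using AE_sphere by eventually_elim (use assms(2) in auto)
    show "g \<in> borel_measurable uniform_sphere"
      using assms(1) by (simp add: measurable_cong_sets[OF sets_sphere refl])
  qed
qed

lemma sph_int_T:
  fixes T :: "'a::euclidean_space \<Rightarrow> 'a" and g :: "'a \<Rightarrow> real"
  assumes Tm: "T \<in> borel_measurable borel" and Tl: "distr lborel borel T = lborel"
    and Tn: "\<And>x. norm (T x) = norm x" and Ts: "\<And>c x. T (c *\<^sub>R x) = c *\<^sub>R T x"
    and g: "g \<in> borel_measurable borel"
  shows "(\<integral>u. g (T u) \<partial>uniform_sphere) = (\<integral>u. g u \<partial>uniform_sphere)"
proof -
  have TmS: "T \<in> measurable uniform_sphere borel"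
    using Tm by (simp add: measurable_cong_sets[OF sets_sphere refl])
  have "(\<integral>u. g u \<partial>uniform_sphere) = (\<integral>u. g u \<partial>distr uniform_sphere borel T)"
    unfolding sphere_inv[OF Tm Tl Tn Ts] ..
  also have "\<dots> = (\<integral>u. g (T u) \<partial>uniform_sphere)"
    by (rule integral_distr[OF TmS g])
  finally show ?thesis ..
qed

lemma comp_meas: "(\<lambda>u::real^'n::finite. u $ i * u $ j) \<in> borel_measurable borel"
  by measurable

lemma comp_bound: "norm (u::real^'n::finite) = 1 \<Longrightarrow> \<bar>u $ i * u $ j\<bar> \<le> 1"
proof -
  assume "norm u = 1"
  then have "\<bar>u $ i\<bar> \<le> 1" "\<bar>u $ j\<bar> \<le> 1" using component_le_norm_cart[of u] by metis+
  then show ?thesis by (simp add: abs_mult mult_le_one)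
qed

lemma comp_int: "integrable (uniform_sphere :: (real^'n::finite) measure) (\<lambda>u. u $ i * u $ j)"
  by (rule sph_integrable[OF comp_meas comp_bound])

lemma mom_off: assumes "i \<noteq> j"
  shows "(\<integral>u. u $ i * u $ j \<partial>(uniform_sphere :: (real^'n::finite) measure)) = 0"
proof -
  have "(\<integral>u. (rfl i u) $ i * (rfl i u) $ j \<partial>(uniform_sphere :: (real^'n) measure)) =
        (\<integral>u. u $ i * u $ j \<partial>uniform_sphere)"
    by (rule sph_int_T[OF rfl_meas lborel_rfl norm_rfl rfl_scale comp_meas])
  moreover have "(\<lambda>u. (rfl i u) $ i * (rfl i u) $ j) = (\<lambda>u. - (u $ i * u $ j))"
    using assms by (auto simp: rfl_def)
  ultimately show ?thesis by simp
qed

lemma mom_diag_eq: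
  fixes i j :: "'n::finite"
  shows "(\<integral>u. u $ i * u $ i \<partial>(uniform_sphere :: (real^'n::finite) measure)) =
         (\<integral>u. u $ j * u $ j \<partial>uniform_sphere)"
proof -
  have "(\<integral>u. (swp i j u) $ i * (swp i j u) $ i \<partial>(uniform_sphere :: (real^'n) measure)) =
        (\<integral>u. u $ i * u $ i \<partial>uniform_sphere)"
    by (rule sph_int_T[OF swp_meas lborel_swp norm_swp swp_scale comp_meas])
  moreover have "(\<lambda>u. (swp i j u) $ i * (swp i j u) $ i) = (\<lambda>u. u $ j * u $ j)"
    by (auto simp: swp_def sw_def)
  ultimately show ?thesis by simp
qed

lemma sumsq: "(\<Sum>k\<in>UNIV. (u::real^'n::finite) $ k * u $ k) = (norm u)\<^sup>2"
  by (simp add: power2_norm_eq_inner inner_vec_def)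

lemma mom_diag:
  shows "(\<integral>u. u $ i * u $ i \<partial>(uniform_sphere :: (real^'n::finite) measure)) = 1 / CARD('n)"
proof -
  interpret S: prob_space "uniform_sphere :: (real^'n) measure" by (rule prob_sphere)
  have "(\<Sum>k\<in>UNIV. (\<integral>u. u $ k * u $ k \<partial>(uniform_sphere :: (real^'n) measure))) =
        (\<integral>u. (\<Sum>k\<in>UNIV. u $ k * u $ k) \<partial>(uniform_sphere :: (real^'n) measure))"
    by (simp add: comp_int)
  also have "\<dots> = (\<integral>u. 1 \<partial>(uniform_sphere :: (real^'n) measure))"
  proof (rule integral_cong_AE)
    show "AE u in (uniform_sphere :: (real^'n) measure). (\<Sum>k\<in>UNIV. u $ k * u $ k) = 1"
      using AE_sphere by eventually_elim (simp add: sumsq)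
  qed (auto simp: measurable_cong_sets[OF sets_sphere refl])
  also have "\<dots> = 1" using S.prob_space by simp
  finally have "(\<Sum>k\<in>UNIV. (\<integral>u. u $ k * u $ k \<partial>(uniform_sphere :: (real^'n) measure))) = 1" .
  moreover have "(\<Sum>k\<in>UNIV. (\<integral>u. u $ k * u $ k \<partial>(uniform_sphere :: (real^'n) measure))) =
     CARD('n) * (\<integral>u. u $ i * u $ i \<partial>uniform_sphere)"
  proof -
    have "(\<Sum>k\<in>UNIV. (\<integral>u. u $ k * u $ k \<partial>(uniform_sphere :: (real^'n) measure))) =
      (\<Sum>k\<in>(UNIV::'n set). (\<integral>u. u $ i * u $ i \<partial>(uniform_sphere :: (real^'n) measure)))"
      by (rule sum.cong[OF refl]) (rule mom_diag_eq)
    then show ?thesis by simp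
  qed
  ultimately show ?thesis by (simp add: field_simps)
qed

lemma sphere_bilin:
  fixes a b :: "real^'n::finite"
  shows "integrable uniform_sphere (\<lambda>u. (a \<bullet> u) * (b \<bullet> u))"
    and "(\<integral>u. (a \<bullet> u) * (b \<bullet> u) \<partial>uniform_sphere) = (a \<bullet> b) / CARD('n)"
proof -
  have eq: "(\<lambda>u. (a \<bullet> u) * (b \<bullet> u)) = (\<lambda>u. \<Sum>i\<in>UNIV. \<Sum>j\<in>UNIV. (a $ i * b $ j) * (u $ i * u $ j))"
    by (auto simp: inner_vec_def sum_product algebra_simps)
  show "integrable uniform_sphere (\<lambda>u. (a \<bullet> u) * (b \<bullet> u))"
    unfolding eq by (auto intro!: integrable_sum integrable_mult_right comp_int)
  have "(\<integral>u. (a \<bullet> u) * (b \<bullet> u) \<partial>uniform_sphere) =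
     (\<Sum>i\<in>UNIV. \<Sum>j\<in>UNIV. (a $ i * b $ j) * (\<integral>u. u $ i * u $ j \<partial>(uniform_sphere :: (real^'n) measure)))"
    unfolding eq by (simp add: integral_sum integrable_sum comp_int)
  also have "\<dots> = (\<Sum>i\<in>UNIV. (a $ i * b $ i) / CARD('n))"
  proof (rule sum.cong[OF refl])
    fix i
    have "(\<Sum>j\<in>UNIV. (a $ i * b $ j) * (\<integral>u. u $ i * u $ j \<partial>(uniform_sphere :: (real^'n) measure))) =
          (\<Sum>j\<in>{i}. (a $ i * b $ j) * (\<integral>u. u $ i * u $ j \<partial>(uniform_sphere :: (real^'n) measure)))"
      by (rule sum.mono_neutral_right) (auto simp: mom_off)
    also have "\<dots> = (a $ i * b $ i) / CARD('n)" by (simp add: mom_diag)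
    finally show "(\<Sum>j\<in>UNIV. (a $ i * b $ j) * (\<integral>u. u $ i * u $ j \<partial>(uniform_sphere :: (real^'n) measure))) = (a $ i * b $ i) / CARD('n)" .
  qed
  also have "\<dots> = (a \<bullet> b) / CARD('n)" by (simp add: inner_vec_def sum_divide_distrib)
  finally show "(\<integral>u. (a \<bullet> u) * (b \<bullet> u) \<partial>uniform_sphere) = (a \<bullet> b) / CARD('n)" .
qed

lemma scalar_core:
  fixes \<epsilon> g0 e0 Ge k Fw WW FF B :: real
  assumes "g0 \<ge> 0" "e0 \<ge> 0" "\<bar>Ge\<bar> \<le> g0 * e0" "3/8 \<le> k" "k \<le> 1/2"
    and "Fw = g0\<^sup>2 + (1 - k) * Ge - k * e0\<^sup>2"
    and "WW \<le> g0 + k * e0"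
    and "FF \<le> 5/4 * g0\<^sup>2 + 5 * e0\<^sup>2"
    and "B \<ge> 0" "B\<^sup>2 \<le> \<epsilon>\<^sup>2 / 24"
  shows "- 8/3 * e0\<^sup>2 - Fw + B * WW + 3/16 * FF + \<epsilon>\<^sup>2/32 + 5/96 * \<epsilon>\<^sup>2 + \<epsilon> * g0 \<le> 7/8 * \<epsilon>\<^sup>2"
proof -
  have a1: "(1 - k) * Ge \<ge> - (5/8) * (g0 * e0)"
  proof -
    have "(1 - k) * (- (g0 * e0)) \<le> (1 - k) * Ge"
      using assms(3,5) by (intro mult_left_mono) (auto simp: abs_le_iff)
    moreover have "(1 - k) * (g0 * e0) \<le> 5/8 * (g0 * e0)"
      using assms(1,2,4) by (intro mult_right_mono) auto
    ultimately show ?thesis by (simp add: algebra_simps)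
  qed
  have a2: "5/8 * (g0 * e0) \<le> 1/5 * g0\<^sup>2 + 1/2 * e0\<^sup>2"
  proof -
    have "0 \<le> 1/5 * (g0 - 25/16 * e0)\<^sup>2" by simp
    moreover have "1/5 * (g0 - 25/16 * e0)\<^sup>2 = 1/5 * g0\<^sup>2 - 5/8 * (g0 * e0) + 125/256 * e0\<^sup>2"
      by (simp add: power2_eq_square algebra_simps)
    moreover have "0 \<le> e0\<^sup>2" by simp
    ultimately show ?thesis by linarith
  qed
  have b1: "B * WW \<le> B * g0 + B * (k * e0)"
    using mult_left_mono[OF assms(7) assms(9)] by (simp add: algebra_simps)
  have b2: "B * g0 \<le> 1/8 * g0\<^sup>2 + 2 * B\<^sup>2"
  proof -
    have "0 \<le> 1/8 * (g0 - 4 * B)\<^sup>2" by simp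
    moreover have "1/8 * (g0 - 4 * B)\<^sup>2 = 1/8 * g0\<^sup>2 - B * g0 + 2 * B\<^sup>2"
      by (simp add: power2_eq_square algebra_simps)
    ultimately show ?thesis by linarith
  qed
  have b3: "B * (k * e0) \<le> 1/4 * e0\<^sup>2 + 1/4 * B\<^sup>2"
  proof -
    have "B * (k * e0) \<le> B * (1/2 * e0)"
      using assms(2,5,9) by (intro mult_left_mono mult_right_mono) auto
    moreover have "0 \<le> 1/4 * (e0 - B)\<^sup>2" by simp
    moreover have "1/4 * (e0 - B)\<^sup>2 = 1/4 * e0\<^sup>2 - B * (1/2 * e0) + 1/4 * B\<^sup>2"
      by (simp add: power2_eq_square algebra_simps)
    ultimately show ?thesis by linarith
  qed
  have b4: "\<epsilon> * g0 \<le> 2/5 * g0\<^sup>2 + 5/8 * \<epsilon>\<^sup>2"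
  proof -
    have "0 \<le> 2/5 * (g0 - 5/4 * \<epsilon>)\<^sup>2" by simp
    moreover have "2/5 * (g0 - 5/4 * \<epsilon>)\<^sup>2 = 2/5 * g0\<^sup>2 - \<epsilon> * g0 + 5/8 * \<epsilon>\<^sup>2"
      by (simp add: power2_eq_square algebra_simps)
    ultimately show ?thesis by linarith
  qed
  have b5: "k * e0\<^sup>2 \<le> 1/2 * e0\<^sup>2"
    using assms(5) by (intro mult_right_mono) auto
  have "0 \<le> g0\<^sup>2" "0 \<le> e0\<^sup>2" by simp_all
  note nn = this
  have c1: "- Fw \<le> - g0\<^sup>2 + 5/8 * (g0 * e0) + 1/2 * e0\<^sup>2" using a1 b5 assms(6) by linarith
  have c2: "B * WW \<le> 1/8 * g0\<^sup>2 + 1/4 * e0\<^sup>2 + 9/4 * B\<^sup>2" using b1 b2 b3 by linarith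
  have c3: "3/16 * FF \<le> 15/64 * g0\<^sup>2 + 15/16 * e0\<^sup>2" using assms(8) by linarith
  have c4: "9/4 * B\<^sup>2 \<le> 3/32 * \<epsilon>\<^sup>2" using assms(10) by linarith
  have d1: "- 8/3 * e0\<^sup>2 - Fw + B * WW + 3/16 * FF + \<epsilon>\<^sup>2/32 + 5/96 * \<epsilon>\<^sup>2 + \<epsilon> * g0 \<le>
    - 8/3 * e0\<^sup>2 + (- g0\<^sup>2 + 5/8 * (g0 * e0) + 1/2 * e0\<^sup>2) + (1/8 * g0\<^sup>2 + 1/4 * e0\<^sup>2 + 9/4 * B\<^sup>2)
     + (15/64 * g0\<^sup>2 + 15/16 * e0\<^sup>2) + \<epsilon>\<^sup>2/32 + 5/96 * \<epsilon>\<^sup>2 + \<epsilon> * g0"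
    using c1 c2 c3 by linarith
  have d2: "\<dots> \<le> - 8/3 * e0\<^sup>2 + (- g0\<^sup>2 + (1/5 * g0\<^sup>2 + 1/2 * e0\<^sup>2) + 1/2 * e0\<^sup>2) + (1/8 * g0\<^sup>2 + 1/4 * e0\<^sup>2 + 3/32 * \<epsilon>\<^sup>2)
     + (15/64 * g0\<^sup>2 + 15/16 * e0\<^sup>2) + \<epsilon>\<^sup>2/32 + 5/96 * \<epsilon>\<^sup>2 + (2/5 * g0\<^sup>2 + 5/8 * \<epsilon>\<^sup>2)"
    using c4 a2 b4 by linarith
  have d3: "\<dots> = - 13/320 * g0\<^sup>2 - 23/48 * e0\<^sup>2 + 77/96 * \<epsilon>\<^sup>2" by (simp add: algebra_simps)
  have "0 \<le> \<epsilon>\<^sup>2" by simp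
  show ?thesis using d1 d2 d3 nn \<open>0 \<le> \<epsilon>\<^sup>2\<close> by linarith
qed


locale zo = minimax f \<mu> l for f :: "real^'n \<Rightarrow> real^'m \<Rightarrow> real" and \<mu> l +
  fixes \<alpha> \<beta> \<mu>1 \<mu>2 \<epsilon> Pstar :: real
  assumes alpha_pos: "0 < \<alpha>" and beta_pos: "0 < \<beta>" and eps_pos: "0 < \<epsilon>"
    and mu1_pos: "0 < \<mu>1" and mu2_pos: "0 < \<mu>2"
    and Pstar: "\<forall>x. Pstar \<le> Phi f x"
    and beta_le: "\<beta> \<le> 1 / (4 * real CARD('m) * (l + l\<^sup>2 / (2 * \<mu>)))"
    and alpha_le1: "\<alpha> \<le> \<beta> / (32 * (l / \<mu>)\<^sup>2)"
    and alpha_le2: "\<alpha> \<le> 1 / (10 * real CARD('n) * (l + l\<^sup>2 / (2 * \<mu>)))"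
    and noise1: "(real CARD('n))\<^sup>2 * (l + l\<^sup>2 / (2 * \<mu>))\<^sup>2 * \<mu>1\<^sup>2 \<le> \<epsilon>\<^sup>2 / 6"
    and noise2: "\<beta> * (real CARD('m))\<^sup>2 * (l + l\<^sup>2 / (2 * \<mu>))\<^sup>2 * \<mu>2\<^sup>2 \<le> \<alpha> * \<epsilon>\<^sup>2 / 3"
begin

definition "L = l + l\<^sup>2 / (2 * \<mu>)"
definition "nn = real CARD('n)"
definition "mm = real CARD('m)"
definition "\<rho>0 = min (\<mu> * \<beta>) (1/4)"
definition "Ny = \<beta> * mm\<^sup>2 * l\<^sup>2 * \<mu>2\<^sup>2 * (1 + l * \<beta>) / 4"

definition xnext :: "real^'n \<Rightarrow> real^'m \<Rightarrow> real^'n \<Rightarrow> real^'n" where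
  "xnext x y u = x - (\<alpha> * ((f (x + \<mu>1 *\<^sub>R u) y - f x y) / (\<mu>1 / real DIM(real^'n)))) *\<^sub>R u"
definition ynext :: "real^'n \<Rightarrow> real^'m \<Rightarrow> real^'m \<Rightarrow> real^'m" where
  "ynext x y v = y + (\<beta> * ((f x (y + \<mu>2 *\<^sub>R v) - f x y) / (\<mu>2 / real DIM(real^'m)))) *\<^sub>R v"

definition "Vf x y = \<Phi> x - Pstar + (\<Phi> x - f x y) / 2"

lemma L_pos: "L > 0" unfolding L_def using l_pos mu_pos by (simp add: add_pos_nonneg)
lemma l_le_L: "l \<le> L" unfolding L_def using mu_pos by simp
lemma nn_ge1: "nn \<ge> 1" unfolding nn_def by simp
lemma mm_ge1: "mm \<ge> 1" unfolding mm_def by simp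

lemma lbm: "l * \<beta> * mm \<le> 1/4"
proof -
  have "\<beta> * (4 * mm * L) \<le> 1" using beta_le L_pos mm_ge1
    unfolding L_def[symmetric] mm_def[symmetric] by (simp add: le_divide_eq mult.commute)
  moreover have "l * \<beta> * mm \<le> L * \<beta> * mm"
    using l_le_L beta_pos mm_ge1 by (intro mult_right_mono) auto
  ultimately show ?thesis by (simp add: algebra_simps)
qed

lemma lb: "l * \<beta> \<le> 1/4"
proof -
  have "l * \<beta> * 1 \<le> l * \<beta> * mm" using mm_ge1 l_pos beta_pos by (intro mult_left_mono) auto
  then show ?thesis using lbm by simp
qed

lemma rho0: "0 \<le> \<rho>0" "\<rho>0 \<le> 1/4" "\<rho>0 \<le> \<mu> * \<beta>"
  unfolding \<rho>0_def using mu_pos beta_pos by auto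

lemma Ny_nonneg: "0 \<le> Ny" unfolding Ny_def using beta_pos l_pos by simp

lemma Vf_nonneg: "0 \<le> Vf x y" unfolding Vf_def using Pstar Phi_ge[of x y] by force

lemma ynext_eq: "ynext x y v = y + (\<beta> * mm * ((f x (y + \<mu>2 *\<^sub>R v) - f x y) / \<mu>2)) *\<^sub>R v"
  unfolding ynext_def mm_def by (simp add: field_simps)

lemma xnext_eq: "xnext x y u = x + (- (\<alpha> * nn * ((f (x + \<mu>1 *\<^sub>R u) y - f x y) / \<mu>1))) *\<^sub>R u"
  unfolding xnext_def nn_def by (simp add: field_simps)


lemma ystep_pointwise:
  fixes x :: "real^'n" and y v :: "real^'m"
  assumes v1: "norm v = 1"
  defines "H \<equiv> fy x y" and "\<rho>2 \<equiv> l * \<mu>2 / 2"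
  shows "Vf x (ynext x y v) \<le>
     (\<Phi> x - Pstar + (\<Phi> x - f x y) / 2 + (\<beta> * mm * \<rho>2 * norm H + l * \<beta>\<^sup>2 * mm\<^sup>2 * \<rho>2\<^sup>2) / 2)
     + (- (\<beta> * mm - l * \<beta>\<^sup>2 * mm\<^sup>2) / 2) * ((H \<bullet> v) * (H \<bullet> v))"
proof -
  define p where "p = H \<bullet> v"
  define r where "r = f x (y + \<mu>2 *\<^sub>R v) - f x y - \<mu>2 * p"
  define t where "t = r / \<mu>2"
  define s where "s = p + t"
  have nv: "norm (\<mu>2 *\<^sub>R v) = \<mu>2" using v1 mu2_pos by simp
  have r_bd: "\<bar>r\<bar> \<le> l / 2 * \<mu>2\<^sup>2"
    using quad_y[of x y "\<mu>2 *\<^sub>R v"] nv unfolding r_def p_def H_def abs_le_iff by auto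
  have t_bd: "\<bar>t\<bar> \<le> \<rho>2"
    using r_bd mu2_pos unfolding t_def \<rho>2_def by (simp add: abs_div power2_eq_square divide_le_eq field_simps)
  have p_bd: "\<bar>p\<bar> \<le> norm H" using Cauchy_Schwarz_ineq2[of H v] v1 unfolding p_def by simp
  have s_eq: "(f x (y + \<mu>2 *\<^sub>R v) - f x y) / \<mu>2 = s"
    unfolding s_def t_def r_def using mu2_pos by (simp add: field_simps)
  have yn: "ynext x y v = y + (\<beta> * mm * s) *\<^sub>R v" unfolding ynext_eq s_eq ..
  have q: "f x (ynext x y v) \<ge> f x y + H \<bullet> ((\<beta> * mm * s) *\<^sub>R v) - l / 2 * (norm ((\<beta> * mm * s) *\<^sub>R v))\<^sup>2"
    unfolding yn H_def by (rule quad_y)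
  have q1: "H \<bullet> ((\<beta> * mm * s) *\<^sub>R v) = \<beta> * mm * (s * p)" unfolding p_def by simp
  have q2: "(norm ((\<beta> * mm * s) *\<^sub>R v))\<^sup>2 = \<beta>\<^sup>2 * mm\<^sup>2 * s\<^sup>2"
    using v1 by (simp add: power_mult_distrib)
  have sp: "s * p \<ge> p\<^sup>2 - \<rho>2 * norm H"
  proof -
    have "t * p \<ge> - (\<bar>t\<bar> * \<bar>p\<bar>)" by (metis abs_ge_minus_self abs_mult minus_le_iff)
    moreover have "\<bar>t\<bar> * \<bar>p\<bar> \<le> \<rho>2 * norm H" using t_bd p_bd by (intro mult_mono) auto
    ultimately show ?thesis unfolding s_def by (simp add: algebra_simps power2_eq_square)
  qed
  have ss: "s\<^sup>2 \<le> 2 * p\<^sup>2 + 2 * \<rho>2\<^sup>2"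
  proof -
    have "t\<^sup>2 \<le> \<rho>2\<^sup>2" using t_bd by (metis abs_le_square_iff abs_of_nonneg abs_ge_zero order_trans)
    moreover have "0 \<le> (p - t)\<^sup>2" by simp
    ultimately show ?thesis unfolding s_def by (simp add: power2_eq_square algebra_simps)
  qed
  have bm: "0 \<le> \<beta> * mm" using beta_pos mm_ge1 by simp
  have lbm2: "0 \<le> l / 2 * (\<beta>\<^sup>2 * mm\<^sup>2)" using l_pos by simp
  have "\<beta> * mm * (s * p) \<ge> \<beta> * mm * (p\<^sup>2 - \<rho>2 * norm H)" using mult_left_mono[OF sp bm] .
  moreover have "l / 2 * (\<beta>\<^sup>2 * mm\<^sup>2 * s\<^sup>2) \<le> l / 2 * (\<beta>\<^sup>2 * mm\<^sup>2 * (2 * p\<^sup>2 + 2 * \<rho>2\<^sup>2))"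
    using mult_left_mono[OF ss, of "l / 2 * (\<beta>\<^sup>2 * mm\<^sup>2)"] lbm2 by (simp add: mult.assoc)
  moreover have q': "f x (ynext x y v) \<ge> f x y + \<beta> * mm * (s * p) - l / 2 * (\<beta>\<^sup>2 * mm\<^sup>2 * s\<^sup>2)"
    using q unfolding q1 q2 by (simp add: mult.assoc)
  moreover have "l / 2 * (\<beta>\<^sup>2 * mm\<^sup>2 * (2 * p\<^sup>2 + 2 * \<rho>2\<^sup>2)) = l * \<beta>\<^sup>2 * mm\<^sup>2 * (p\<^sup>2 + \<rho>2\<^sup>2)"
    by (simp add: algebra_simps)
  ultimately have low: "f x (ynext x y v) - f x y \<ge> \<beta> * mm * (p\<^sup>2 - \<rho>2 * norm H) - l * \<beta>\<^sup>2 * mm\<^sup>2 * (p\<^sup>2 + \<rho>2\<^sup>2)"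
    by linarith
  have e1: "Vf x (ynext x y v) = \<Phi> x - Pstar + (\<Phi> x - f x y) / 2 - (f x (ynext x y v) - f x y) / 2"
    unfolding Vf_def by (simp add: field_simps)
  have e2: "(\<Phi> x - Pstar + (\<Phi> x - f x y) / 2 + (\<beta> * mm * \<rho>2 * norm H + l * \<beta>\<^sup>2 * mm\<^sup>2 * \<rho>2\<^sup>2) / 2)
     + (- (\<beta> * mm - l * \<beta>\<^sup>2 * mm\<^sup>2) / 2) * ((H \<bullet> v) * (H \<bullet> v)) =
     \<Phi> x - Pstar + (\<Phi> x - f x y) / 2 - (\<beta> * mm * (p\<^sup>2 - \<rho>2 * norm H) - l * \<beta>\<^sup>2 * mm\<^sup>2 * (p\<^sup>2 + \<rho>2\<^sup>2)) / 2"
    unfolding p_def[symmetric] by (simp add: power2_eq_square field_simps)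
  show ?thesis unfolding e1 e2 using divide_right_mono[OF low, of 2] by (simp only: diff_le_eq le_diff_eq) linarith
qed


lemma ystep_scalar:
  fixes x :: "real^'n" and y :: "real^'m"
  defines "H \<equiv> fy x y" and "\<rho>2 \<equiv> l * \<mu>2 / 2"
  shows "(\<Phi> x - Pstar + (\<Phi> x - f x y) / 2 + (\<beta> * mm * \<rho>2 * norm H + l * \<beta>\<^sup>2 * mm\<^sup>2 * \<rho>2\<^sup>2) / 2)
     + (- (\<beta> * mm - l * \<beta>\<^sup>2 * mm\<^sup>2) / 2) * ((H \<bullet> H) / mm)
     \<le> \<Phi> x - Pstar + ((1 - \<rho>0) * (\<Phi> x - f x y) + Ny) / 2"
proof -
  define A where "A = \<Phi> x - f x y"
  define h where "h = norm H"
  have A0: "0 \<le> A" unfolding A_def using Phi_ge by simp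
  have HH: "H \<bullet> H = h\<^sup>2" unfolding h_def by (simp add: power2_norm_eq_inner)
  have m0: "mm > 0" using mm_ge1 by simp
  have e1: "(- (\<beta> * mm - l * \<beta>\<^sup>2 * mm\<^sup>2) / 2) * ((H \<bullet> H) / mm) = - (\<beta> * h\<^sup>2) / 2 + l * \<beta>\<^sup>2 * mm * h\<^sup>2 / 2"
    unfolding HH using m0 by (simp add: field_simps power2_eq_square)
  have f1: "\<beta> * mm * \<rho>2 * h \<le> \<beta> * h\<^sup>2 / 4 + \<beta> * mm\<^sup>2 * \<rho>2\<^sup>2"
  proof -
    have "0 \<le> \<beta> * (h / 2 - mm * \<rho>2)\<^sup>2" using beta_pos by simp
    moreover have "\<beta> * (h / 2 - mm * \<rho>2)\<^sup>2 = \<beta> * h\<^sup>2 / 4 - \<beta> * mm * \<rho>2 * h + \<beta> * mm\<^sup>2 * \<rho>2\<^sup>2"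
      by (simp add: power2_eq_square algebra_simps)
    ultimately show ?thesis by linarith
  qed
  have f2: "l * \<beta>\<^sup>2 * mm * h\<^sup>2 \<le> \<beta> * h\<^sup>2 / 4"
  proof -
    have "(l * \<beta> * mm) * (\<beta> * h\<^sup>2) \<le> (1/4) * (\<beta> * h\<^sup>2)"
      using lbm beta_pos by (intro mult_right_mono) auto
    then show ?thesis by (simp add: power2_eq_square algebra_simps)
  qed
  have f3: "\<rho>0 * A \<le> \<beta> * h\<^sup>2 / 2"
  proof -
    have "\<rho>0 * A \<le> (\<mu> * \<beta>) * A" using rho0 A0 by (intro mult_right_mono) auto
    moreover have "A \<le> h\<^sup>2 / (2 * \<mu>)" unfolding A_def h_def H_def by (rule PL')
    then have "(\<mu> * \<beta>) * A \<le> (\<mu> * \<beta>) * (h\<^sup>2 / (2 * \<mu>))" using mu_pos beta_pos by (intro mult_left_mono) auto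
    moreover have "(\<mu> * \<beta>) * (h\<^sup>2 / (2 * \<mu>)) = \<beta> * h\<^sup>2 / 2" using mu_pos by (simp add: field_simps)
    ultimately show ?thesis by linarith
  qed
  have f4: "\<beta> * mm\<^sup>2 * \<rho>2\<^sup>2 + l * \<beta>\<^sup>2 * mm\<^sup>2 * \<rho>2\<^sup>2 = Ny"
    unfolding Ny_def \<rho>2_def by (simp add: power2_eq_square field_simps)
  have "(\<beta> * mm * \<rho>2 * norm H + l * \<beta>\<^sup>2 * mm\<^sup>2 * \<rho>2\<^sup>2) / 2 + (- (\<beta> * h\<^sup>2) / 2 + l * \<beta>\<^sup>2 * mm * h\<^sup>2 / 2)
      \<le> (- \<rho>0 * A + Ny) / 2"
    using f1 f2 f3 f4 unfolding h_def[symmetric] by (simp add: field_simps)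
  then show ?thesis unfolding e1 A_def[symmetric] by (simp add: field_simps)
qed

lemma ystep:
  fixes x :: "real^'n" and y :: "real^'m"
  shows "(\<integral>\<^sup>+v. ennreal (Vf x (ynext x y v)) \<partial>(uniform_sphere :: (real^'m) measure))
     \<le> ennreal (\<Phi> x - Pstar + ((1 - \<rho>0) * (\<Phi> x - f x y) + Ny) / 2)"
proof -
  interpret S: prob_space "uniform_sphere :: (real^'m) measure" by (rule prob_sphere)
  have pu: "measure (uniform_sphere :: (real^'m) measure) UNIV = 1"
    using S.prob_space by simp
  define H where "H = fy x y"
  define \<rho>2 where "\<rho>2 = l * \<mu>2 / 2"
  define K1 where "K1 = \<Phi> x - Pstar + (\<Phi> x - f x y) / 2 + (\<beta> * mm * \<rho>2 * norm H + l * \<beta>\<^sup>2 * mm\<^sup>2 * \<rho>2\<^sup>2) / 2"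
  define K2 where "K2 = - (\<beta> * mm - l * \<beta>\<^sup>2 * mm\<^sup>2) / 2"
  define Q where "Q v = K1 + K2 * ((H \<bullet> v) * (H \<bullet> v))" for v :: "real^'m"
  have pw: "AE v in (uniform_sphere :: (real^'m) measure). Vf x (ynext x y v) \<le> Q v"
    using AE_sphere by eventually_elim (use ystep_pointwise in \<open>simp add: Q_def K1_def K2_def H_def \<rho>2_def\<close>)
  have intQ: "integrable (uniform_sphere :: (real^'m) measure) Q"
    unfolding Q_def by (rule Bochner_Integration.integrable_add) (auto intro!: integrable_mult_right sphere_bilin(1) simp: S.emeasure_space_1)
  have Q0: "AE v in (uniform_sphere :: (real^'m) measure). 0 \<le> Q v"
    using pw by eventually_elim (use Vf_nonneg in \<open>metis order_trans\<close>)
  have "(\<integral>\<^sup>+v. ennreal (Vf x (ynext x y v)) \<partial>(uniform_sphere :: (real^'m) measure))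
        \<le> (\<integral>\<^sup>+v. ennreal (Q v) \<partial>uniform_sphere)"
    by (rule nn_integral_mono_AE) (use pw in \<open>eventually_elim, simp add: ennreal_leI\<close>)
  also have "\<dots> = ennreal (\<integral>v. Q v \<partial>uniform_sphere)"
    by (rule nn_integral_eq_integral[OF intQ Q0])
  also have "(\<integral>v. Q v \<partial>(uniform_sphere :: (real^'m) measure)) = K1 + K2 * ((H \<bullet> H) / mm)"
    unfolding Q_def using sphere_bilin[of H H]
    by (simp add: integral_add integrable_mult_right pu mm_def)
  also have "\<dots> \<le> \<Phi> x - Pstar + ((1 - \<rho>0) * (\<Phi> x - f x y) + Ny) / 2"
    unfolding K1_def K2_def H_def \<rho>2_def by (rule ystep_scalar)
  finally show ?thesis by (simp add: ennreal_leI)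
qed


definition "Rf x y u = \<Phi> (xnext x y u) - Pstar + ((1 - \<rho>0) * (\<Phi> (xnext x y u) - f (xnext x y u) y) + Ny) / 2"

lemma Rf_nonneg: "0 \<le> Rf x y u"
proof -
  have "0 \<le> \<Phi> (xnext x y u) - Pstar" using Pstar by auto
  moreover have "0 \<le> (1 - \<rho>0) * (\<Phi> (xnext x y u) - f (xnext x y u) y)"
    using rho0 Phi_ge by (intro mult_nonneg_nonneg) auto
  ultimately show ?thesis unfolding Rf_def using Ny_nonneg by simp
qed

lemma xstep_pointwise:
  fixes x u :: "real^'n" and y :: "real^'m"
  assumes u1: "norm u = 1"
  defines "F \<equiv> fx x y" and "Gv \<equiv> G x" and "k \<equiv> (1 - \<rho>0) / 2"
    and "\<rho>1 \<equiv> l * \<mu>1 / 2" and "P' \<equiv> (l / 2 + l\<^sup>2 / (2 * \<mu>) + (1 - \<rho>0) / 2 * L) * \<alpha>\<^sup>2 * nn\<^sup>2"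
  defines "w \<equiv> Gv - k *\<^sub>R (F - Gv)"
  shows "Rf x y u \<le> (\<Phi> x - Pstar + k * (\<Phi> x - f x y) + \<alpha> * nn * \<rho>1 * norm w + 5 * P' * \<rho>1\<^sup>2 + Ny / 2)
     + (- \<alpha> * nn) * ((F \<bullet> u) * (w \<bullet> u)) + (5/4 * P') * ((F \<bullet> u) * (F \<bullet> u))"
proof -
  define p where "p = F \<bullet> u"
  define r where "r = f (x + \<mu>1 *\<^sub>R u) y - f x y - \<mu>1 * p"
  define t where "t = r / \<mu>1"
  define s where "s = p + t"
  define d where "d = (- (\<alpha> * nn * s)) *\<^sub>R u"
  define a where "a = \<Phi> x - f x y"
  have k0: "0 \<le> k" "k \<le> 1/2" unfolding k_def using rho0 by auto
  have nu: "norm (\<mu>1 *\<^sub>R u) = \<mu>1" using u1 mu1_pos by simp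
  have r_bd: "\<bar>r\<bar> \<le> l / 2 * \<mu>1\<^sup>2"
    using quad_x[where x=x and d="\<mu>1 *\<^sub>R u" and y=y] nu unfolding r_def p_def F_def abs_le_iff by auto
  have t_bd: "\<bar>t\<bar> \<le> \<rho>1"
    using r_bd mu1_pos unfolding t_def \<rho>1_def by (simp add: abs_div power2_eq_square divide_le_eq field_simps)
  have s_eq: "(f (x + \<mu>1 *\<^sub>R u) y - f x y) / \<mu>1 = s"
    unfolding s_def t_def r_def using mu1_pos by (simp add: field_simps)
  have xn: "xnext x y u = x + d" unfolding xnext_eq s_eq d_def ..
  have nd: "(norm d)\<^sup>2 = \<alpha>\<^sup>2 * nn\<^sup>2 * s\<^sup>2" unfolding d_def using u1 by (simp add: power_mult_distrib)
  have up: "\<Phi> (x + d) \<le> \<Phi> x + Gv \<bullet> d + (l / 2 + l\<^sup>2 / (2 * \<mu>)) * (norm d)\<^sup>2"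
    unfolding Gv_def by (rule Phi_upper)
  have lo: "f (x + d) y \<ge> f x y + F \<bullet> d - l / 2 * (norm d)\<^sup>2"
    unfolding F_def by (rule quad_x)
  have Gd: "Gv \<bullet> d = - (\<alpha> * nn * s) * (Gv \<bullet> u)" unfolding d_def by simp
  have Fd: "F \<bullet> d = - (\<alpha> * nn * s) * p" unfolding d_def p_def by simp
  define C where "C = l / 2 + l\<^sup>2 / (2 * \<mu>)"
  have CL: "C + l / 2 = L" unfolding C_def L_def by simp
  have A': "\<Phi> (x + d) - f (x + d) y \<le> a + \<alpha> * nn * s * (p - Gv \<bullet> u) + L * (\<alpha>\<^sup>2 * nn\<^sup>2 * s\<^sup>2)"
  proof -
    have "\<Phi> (x + d) - f (x + d) y \<le> a + (Gv \<bullet> d - F \<bullet> d) + (C + l / 2) * (norm d)\<^sup>2"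
      using up lo unfolding a_def C_def by (simp add: algebra_simps)
    also have "Gv \<bullet> d - F \<bullet> d = \<alpha> * nn * s * (p - Gv \<bullet> u)" unfolding Gd Fd by (simp add: algebra_simps)
    finally show ?thesis unfolding CL nd .
  qed
  have R1: "Rf x y u \<le> \<Phi> x - Pstar + k * a - \<alpha> * nn * s * (w \<bullet> u) + (C + k * L) * (\<alpha>\<^sup>2 * nn\<^sup>2 * s\<^sup>2) + Ny / 2"
  proof -
    have "Rf x y u = \<Phi> (x + d) - Pstar + k * (\<Phi> (x + d) - f (x + d) y) + Ny / 2"
      unfolding Rf_def xn k_def by (simp add: field_simps)
    also have "\<dots> \<le> (\<Phi> x + Gv \<bullet> d + C * (norm d)\<^sup>2) - Pstar + k * (a + \<alpha> * nn * s * (p - Gv \<bullet> u) + L * (\<alpha>\<^sup>2 * nn\<^sup>2 * s\<^sup>2)) + Ny / 2"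
      using up mult_left_mono[OF A' k0(1)] unfolding C_def by linarith
    also have "\<dots> = \<Phi> x - Pstar + k * a - \<alpha> * nn * s * (w \<bullet> u) + (C + k * L) * (\<alpha>\<^sup>2 * nn\<^sup>2 * s\<^sup>2) + Ny / 2"
      unfolding Gd nd w_def p_def by (simp add: algebra_simps inner_diff_left)
    finally show ?thesis .
  qed
  have wb: "\<bar>w \<bullet> u\<bar> \<le> norm w" using Cauchy_Schwarz_ineq2[of w u] u1 by simp
  have sw: "s * (w \<bullet> u) \<ge> p * (w \<bullet> u) - \<rho>1 * norm w"
  proof -
    have "t * (w \<bullet> u) \<ge> - (\<bar>t\<bar> * \<bar>w \<bullet> u\<bar>)" by (metis abs_ge_minus_self abs_mult minus_le_iff)
    moreover have "\<bar>t\<bar> * \<bar>w \<bullet> u\<bar> \<le> \<rho>1 * norm w" using t_bd wb by (intro mult_mono) auto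
    ultimately show ?thesis unfolding s_def by (simp add: algebra_simps)
  qed
  have ss: "s\<^sup>2 \<le> 5/4 * p\<^sup>2 + 5 * \<rho>1\<^sup>2"
  proof -
    have "t\<^sup>2 \<le> \<rho>1\<^sup>2" using t_bd by (metis abs_le_square_iff abs_of_nonneg abs_ge_zero order_trans)
    moreover have "0 \<le> (p / 2 - 2 * t)\<^sup>2" by simp
    ultimately show ?thesis unfolding s_def by (simp add: power2_eq_square algebra_simps)
  qed
  have an: "0 \<le> \<alpha> * nn" using alpha_pos nn_ge1 by simp
  have Pn: "0 \<le> (C + k * L) * (\<alpha>\<^sup>2 * nn\<^sup>2)"
    using k0 L_pos l_pos mu_pos unfolding C_def by (intro mult_nonneg_nonneg add_nonneg_nonneg) auto
  have T1: "- (\<alpha> * nn * s * (w \<bullet> u)) \<le> - (\<alpha> * nn * (p * (w \<bullet> u))) + \<alpha> * nn * (\<rho>1 * norm w)"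
    using mult_left_mono[OF sw an] by (simp add: algebra_simps)
  have T2: "(C + k * L) * (\<alpha>\<^sup>2 * nn\<^sup>2 * s\<^sup>2) \<le> (C + k * L) * (\<alpha>\<^sup>2 * nn\<^sup>2) * (5/4 * p\<^sup>2 + 5 * \<rho>1\<^sup>2)"
    using mult_left_mono[OF ss Pn] by (simp add: mult.assoc)
  have P'eq: "P' = (C + k * L) * (\<alpha>\<^sup>2 * nn\<^sup>2)" unfolding P'_def C_def k_def by simp
  have fin: "(\<Phi> x - Pstar + k * (\<Phi> x - f x y) + \<alpha> * nn * \<rho>1 * norm w + 5 * P' * \<rho>1\<^sup>2 + Ny / 2)
     + (- \<alpha> * nn) * ((F \<bullet> u) * (w \<bullet> u)) + (5/4 * P') * ((F \<bullet> u) * (F \<bullet> u)) =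
     \<Phi> x - Pstar + k * a - (\<alpha> * nn * (p * (w \<bullet> u))) + \<alpha> * nn * (\<rho>1 * norm w)
     + (C + k * L) * (\<alpha>\<^sup>2 * nn\<^sup>2) * (5/4 * p\<^sup>2 + 5 * \<rho>1\<^sup>2) + Ny / 2"
    unfolding P'eq a_def p_def by (simp add: algebra_simps power2_eq_square)
  show ?thesis unfolding fin using R1 T1 T2 by linarith
qed


lemma anL: "\<alpha> * nn * L \<le> 1/10"
proof -
  have "\<alpha> * (10 * nn * L) \<le> 1" using alpha_le2 L_pos nn_ge1
    unfolding L_def[symmetric] nn_def[symmetric] by (simp add: le_divide_eq mult.commute)
  then show ?thesis by simp
qed

lemma aL: "\<alpha> * L \<le> 1/10"
proof -
  have "\<alpha> * L * 1 \<le> \<alpha> * L * nn" using nn_ge1 alpha_pos L_pos by (intro mult_left_mono) auto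
  then show ?thesis using anL by (simp add: mult.commute mult.left_commute)
qed

lemma P1:
  fixes x :: "real^'n" and y :: "real^'m"
  shows "\<rho>0 * (\<Phi> x - f x y) / 2 \<ge> 8/3 * \<alpha> * (norm (fx x y - G x))\<^sup>2"
proof (cases "\<mu> \<le> l")
  case True
  define a where "a = \<Phi> x - f x y"
  have a0: "0 \<le> a" unfolding a_def using Phi_ge by simp
  have eb: "(norm (fx x y - G x))\<^sup>2 \<le> 4 * L * a"
    using e_bound[of x y] unfolding grad_Phi L_def a_def .
  have lb': "\<mu> * \<beta> \<le> 1/4"
    using lb True beta_pos by (meson mult_right_mono less_imp_le order_trans)
  then have r: "\<rho>0 = \<mu> * \<beta>" unfolding \<rho>0_def by simp
  have b1: "32 * (l / \<mu>)\<^sup>2 * \<alpha> \<le> \<beta>"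
    using alpha_le1 l_pos mu_pos by (simp add: le_divide_eq mult.commute)
  have "\<mu> * \<beta> \<ge> \<mu> * (32 * (l / \<mu>)\<^sup>2 * \<alpha>)" using b1 mu_pos by (intro mult_left_mono) auto
  moreover have "\<mu> * (32 * (l / \<mu>)\<^sup>2 * \<alpha>) = 32 * (l\<^sup>2 / \<mu>) * \<alpha>"
    using mu_pos by (simp add: power2_eq_square field_simps)
  moreover have "32 * (l\<^sup>2 / \<mu>) * \<alpha> \<ge> 64/3 * L * \<alpha>"
  proof -
    have "l\<^sup>2 / \<mu> \<ge> l" using True l_pos mu_pos by (simp add: power2_eq_square field_simps)
    then have "32 * (l\<^sup>2 / \<mu>) \<ge> 64/3 * L" unfolding L_def by simp
    then show ?thesis using alpha_pos by (intro mult_right_mono) auto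
  qed
  ultimately have mb: "\<mu> * \<beta> \<ge> 64/3 * L * \<alpha>" by linarith
  have "8/3 * \<alpha> * (norm (fx x y - G x))\<^sup>2 \<le> 8/3 * \<alpha> * (4 * L * a)"
    using eb alpha_pos by (intro mult_left_mono) auto
  also have "\<dots> = (64/3 * L * \<alpha>) * a / 2" by simp
  also have "\<dots> \<le> (\<mu> * \<beta>) * a / 2" using mb a0 by (intro divide_right_mono mult_right_mono) auto
  finally show ?thesis unfolding r a_def .
next
  case False
  then have "\<Phi> x = f x y" using mu_gt_l by simp
  moreover have "(norm (fx x y - G x))\<^sup>2 \<le> 4 * L * (\<Phi> x - f x y)"
    using e_bound[of x y] unfolding grad_Phi L_def .
  ultimately show ?thesis by simp
qed

lemma P'bound:
  fixes k :: real assumes "0 \<le> k" "k \<le> 1/2"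
  shows "(l / 2 + l\<^sup>2 / (2 * \<mu>) + k * L) * \<alpha>\<^sup>2 * nn\<^sup>2 \<le> 3/2 * L * \<alpha>\<^sup>2 * nn\<^sup>2"
proof -
  have "l / 2 + l\<^sup>2 / (2 * \<mu>) \<le> L" unfolding L_def using l_pos by simp
  moreover have "k * L \<le> 1/2 * L" using assms L_pos by (intro mult_right_mono) auto
  ultimately have "l / 2 + l\<^sup>2 / (2 * \<mu>) + k * L \<le> 3/2 * L" by simp
  then show ?thesis by (intro mult_right_mono) auto
qed

lemma P2:
  fixes P' :: real assumes "0 \<le> P'" "P' \<le> 3/2 * L * \<alpha>\<^sup>2 * nn\<^sup>2"
  shows "5/4 * P' / nn \<le> 3/16 * \<alpha>"
proof -
  have "5/4 * P' / nn \<le> 5/4 * (3/2 * L * \<alpha>\<^sup>2 * nn\<^sup>2) / nn"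
    using assms nn_ge1 by (intro divide_right_mono mult_left_mono) auto
  also have "\<dots> = 15/8 * \<alpha> * (\<alpha> * nn * L)" using nn_ge1 by (simp add: power2_eq_square field_simps)
  also have "\<dots> \<le> 15/8 * \<alpha> * (1/10)" using anL alpha_pos by (intro mult_left_mono) auto
  finally show ?thesis by simp
qed

lemma P3:
  fixes P' :: real assumes "0 \<le> P'" "P' \<le> 3/2 * L * \<alpha>\<^sup>2 * nn\<^sup>2"
  shows "5 * P' * (l * \<mu>1 / 2)\<^sup>2 \<le> \<alpha> * \<epsilon>\<^sup>2 / 32"
proof -
  have n1: "nn\<^sup>2 * L\<^sup>2 * \<mu>1\<^sup>2 \<le> \<epsilon>\<^sup>2 / 6" using noise1 unfolding nn_def L_def .
  have ll: "l\<^sup>2 \<le> L\<^sup>2" using l_le_L l_pos by (intro power_mono) auto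
  have "5 * P' * (l * \<mu>1 / 2)\<^sup>2 \<le> 5 * (3/2 * L * \<alpha>\<^sup>2 * nn\<^sup>2) * (l * \<mu>1 / 2)\<^sup>2"
    using assms by (intro mult_right_mono) auto
  also have "\<dots> = 15/8 * (\<alpha> * L) * \<alpha> * (nn\<^sup>2 * l\<^sup>2 * \<mu>1\<^sup>2)"
    by (simp add: power2_eq_square field_simps)
  also have "\<dots> \<le> 15/8 * (\<alpha> * L) * \<alpha> * (nn\<^sup>2 * L\<^sup>2 * \<mu>1\<^sup>2)"
    using ll alpha_pos L_pos by (intro mult_left_mono mult_right_mono) auto
  also have "\<dots> \<le> 15/8 * (1/10) * \<alpha> * (\<epsilon>\<^sup>2 / 6)"
    using aL n1 alpha_pos L_pos by (intro mult_mono mult_nonneg_nonneg) auto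
  finally show ?thesis by simp
qed

lemma P4: "Ny / 2 \<le> 5/96 * \<alpha> * \<epsilon>\<^sup>2"
proof -
  have n2: "\<beta> * mm\<^sup>2 * L\<^sup>2 * \<mu>2\<^sup>2 \<le> \<alpha> * \<epsilon>\<^sup>2 / 3" using noise2 unfolding mm_def L_def .
  have ll: "l\<^sup>2 \<le> L\<^sup>2" using l_le_L l_pos by (intro power_mono) auto
  have "\<beta> * mm\<^sup>2 * l\<^sup>2 * \<mu>2\<^sup>2 \<le> \<beta> * mm\<^sup>2 * L\<^sup>2 * \<mu>2\<^sup>2"
    using ll beta_pos by (intro mult_right_mono mult_left_mono) auto
  then have a: "\<beta> * mm\<^sup>2 * l\<^sup>2 * \<mu>2\<^sup>2 \<le> \<alpha> * \<epsilon>\<^sup>2 / 3" using n2 by linarith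
  have b: "1 + l * \<beta> \<le> 5/4" using lb by simp
  have "Ny / 2 = (\<beta> * mm\<^sup>2 * l\<^sup>2 * \<mu>2\<^sup>2) * (1 + l * \<beta>) / 8" unfolding Ny_def by simp
  also have "\<dots> \<le> (\<alpha> * \<epsilon>\<^sup>2 / 3) * (5/4) / 8"
    using a b beta_pos l_pos alpha_pos by (intro divide_right_mono mult_mono) auto
  finally show ?thesis by simp
qed

lemma B_bound: "(nn * (l * \<mu>1 / 2))\<^sup>2 \<le> \<epsilon>\<^sup>2 / 24"
proof -
  have n1: "nn\<^sup>2 * L\<^sup>2 * \<mu>1\<^sup>2 \<le> \<epsilon>\<^sup>2 / 6" using noise1 unfolding nn_def L_def .
  have ll: "l\<^sup>2 \<le> L\<^sup>2" using l_le_L l_pos by (intro power_mono) auto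
  have "(nn * (l * \<mu>1 / 2))\<^sup>2 = (nn\<^sup>2 * l\<^sup>2 * \<mu>1\<^sup>2) / 4" by (simp add: power2_eq_square)
  also have "\<dots> \<le> (nn\<^sup>2 * L\<^sup>2 * \<mu>1\<^sup>2) / 4" using ll by (intro divide_right_mono mult_right_mono mult_left_mono) auto
  finally show ?thesis using n1 by simp
qed


lemma xstep_scalar:
  fixes x :: "real^'n" and y :: "real^'m"
  defines "F \<equiv> fx x y" and "Gv \<equiv> G x" and "k \<equiv> (1 - \<rho>0) / 2"
    and "\<rho>1 \<equiv> l * \<mu>1 / 2" and "P' \<equiv> (l / 2 + l\<^sup>2 / (2 * \<mu>) + (1 - \<rho>0) / 2 * L) * \<alpha>\<^sup>2 * nn\<^sup>2"
  defines "w \<equiv> Gv - k *\<^sub>R (F - Gv)"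
  shows "(\<Phi> x - Pstar + k * (\<Phi> x - f x y) + \<alpha> * nn * \<rho>1 * norm w + 5 * P' * \<rho>1\<^sup>2 + Ny / 2)
     + (- \<alpha> * nn) * ((F \<bullet> w) / nn) + (5/4 * P') * ((F \<bullet> F) / nn)
     \<le> Vf x y + 7/8 * \<alpha> * \<epsilon>\<^sup>2 - \<alpha> * \<epsilon> * norm Gv"
proof -
  define e where "e = F - Gv"
  define g0 where "g0 = norm Gv"
  define e0 where "e0 = norm e"
  define a where "a = \<Phi> x - f x y"
  have k0: "3/8 \<le> k" "k \<le> 1/2" "0 \<le> k" unfolding k_def using rho0 by auto
  have Fe: "F = Gv + e" unfolding e_def by simp
  have we: "w = Gv - k *\<^sub>R e" unfolding w_def e_def ..
  have Fw: "F \<bullet> w = g0\<^sup>2 + (1 - k) * (Gv \<bullet> e) - k * e0\<^sup>2"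
    unfolding Fe we g0_def e0_def
    by (simp add: inner_add_left inner_diff_right power2_norm_eq_inner inner_commute algebra_simps)
  have Ge: "\<bar>Gv \<bullet> e\<bar> \<le> g0 * e0" unfolding g0_def e0_def by (rule Cauchy_Schwarz_ineq2)
  have WW: "norm w \<le> g0 + k * e0"
    unfolding we g0_def e0_def using norm_triangle_ineq4[of Gv "k *\<^sub>R e"] k0 by simp
  have FF: "F \<bullet> F \<le> 5/4 * g0\<^sup>2 + 5 * e0\<^sup>2"
  proof -
    have "F \<bullet> F = g0\<^sup>2 + 2 * (Gv \<bullet> e) + e0\<^sup>2"
      unfolding Fe g0_def e0_def by (simp add: inner_add_left inner_add_right power2_norm_eq_inner inner_commute)
    moreover have "2 * (Gv \<bullet> e) \<le> 2 * (g0 * e0)" using Ge by simp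
    moreover have "2 * (g0 * e0) \<le> 1/4 * g0\<^sup>2 + 4 * e0\<^sup>2"
    proof -
      have "0 \<le> 1/4 * (g0 - 4 * e0)\<^sup>2" by simp
      then show ?thesis by (simp add: power2_eq_square algebra_simps)
    qed
    ultimately show ?thesis by linarith
  qed
  have FF0: "0 \<le> F \<bullet> F" by simp
  have B0: "0 \<le> nn * \<rho>1" unfolding \<rho>1_def using nn_ge1 l_pos mu1_pos by simp
  have core: "- 8/3 * e0\<^sup>2 - (F \<bullet> w) + (nn * \<rho>1) * norm w + 3/16 * (F \<bullet> F) + \<epsilon>\<^sup>2/32 + 5/96 * \<epsilon>\<^sup>2 + \<epsilon> * g0 \<le> 7/8 * \<epsilon>\<^sup>2"
    by (rule scalar_core) (use k0 Fw Ge WW FF B0 B_bound in \<open>auto simp: g0_def e0_def \<rho>1_def\<close>)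
  have coreA: "\<alpha> * (- 8/3 * e0\<^sup>2 - (F \<bullet> w) + (nn * \<rho>1) * norm w + 3/16 * (F \<bullet> F) + \<epsilon>\<^sup>2/32 + 5/96 * \<epsilon>\<^sup>2 + \<epsilon> * g0) \<le> \<alpha> * (7/8 * \<epsilon>\<^sup>2)"
    using mult_left_mono[OF core] alpha_pos by simp
  have p1: "\<rho>0 * a / 2 \<ge> 8/3 * \<alpha> * e0\<^sup>2" unfolding a_def e0_def e_def F_def Gv_def by (rule P1)
  have P'0: "0 \<le> P'" unfolding P'_def using l_pos mu_pos rho0 L_pos
    by (intro mult_nonneg_nonneg add_nonneg_nonneg) auto
  have P'b: "P' \<le> 3/2 * L * \<alpha>\<^sup>2 * nn\<^sup>2" unfolding P'_def
    using P'bound[of "(1 - \<rho>0) / 2"] rho0 by simp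
  have p2: "5/4 * P' / nn \<le> 3/16 * \<alpha>" by (rule P2[OF P'0 P'b])
  have p2': "(5/4 * P') * ((F \<bullet> F) / nn) \<le> 3/16 * \<alpha> * (F \<bullet> F)"
  proof -
    have "(5/4 * P') * ((F \<bullet> F) / nn) = (5/4 * P' / nn) * (F \<bullet> F)" by simp
    also have "\<dots> \<le> 3/16 * \<alpha> * (F \<bullet> F)" using p2 FF0 by (intro mult_right_mono) auto
    finally show ?thesis .
  qed
  have p3: "5 * P' * \<rho>1\<^sup>2 \<le> \<alpha> * \<epsilon>\<^sup>2 / 32" unfolding \<rho>1_def by (rule P3[OF P'0 P'b])
  have p4: "Ny / 2 \<le> 5/96 * \<alpha> * \<epsilon>\<^sup>2" by (rule P4)
  have nnz: "nn \<noteq> 0" using nn_ge1 by simp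
  have t1: "(- \<alpha> * nn) * ((F \<bullet> w) / nn) = - (\<alpha> * (F \<bullet> w))" using nnz by simp
  have t2: "\<alpha> * nn * \<rho>1 * norm w = \<alpha> * ((nn * \<rho>1) * norm w)" by simp
  have t3: "k * a = a / 2 - \<rho>0 * a / 2" unfolding k_def by (simp add: field_simps)
  have vf: "Vf x y = \<Phi> x - Pstar + a / 2" unfolding Vf_def a_def ..
  have ex: "\<alpha> * (- 8/3 * e0\<^sup>2 - (F \<bullet> w) + (nn * \<rho>1) * norm w + 3/16 * (F \<bullet> F) + \<epsilon>\<^sup>2/32 + 5/96 * \<epsilon>\<^sup>2 + \<epsilon> * g0)
    = - (8/3 * \<alpha> * e0\<^sup>2) - \<alpha> * (F \<bullet> w) + \<alpha> * ((nn * \<rho>1) * norm w) + 3/16 * \<alpha> * (F \<bullet> F) + \<alpha> * \<epsilon>\<^sup>2 / 32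
       + 5/96 * \<alpha> * \<epsilon>\<^sup>2 + \<alpha> * \<epsilon> * g0"
    by (simp add: algebra_simps)
  show ?thesis unfolding t1 t2 vf a_def[symmetric] g0_def[symmetric]
    using coreA[unfolded ex] t3 p1 p2' p3 p4 by linarith
qed


lemma xstep:
  fixes x :: "real^'n" and y :: "real^'m"
  shows "(\<integral>\<^sup>+u. ennreal (Rf x y u) \<partial>(uniform_sphere :: (real^'n) measure))
     \<le> ennreal (Vf x y + 7/8 * \<alpha> * \<epsilon>\<^sup>2 - \<alpha> * \<epsilon> * norm (G x))"
    and "0 \<le> Vf x y + 7/8 * \<alpha> * \<epsilon>\<^sup>2 - \<alpha> * \<epsilon> * norm (G x)"
proof -
  interpret S: prob_space "uniform_sphere :: (real^'n) measure" by (rule prob_sphere)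
  have pu: "measure (uniform_sphere :: (real^'n) measure) UNIV = 1"
    using S.prob_space by simp
  define F where "F = fx x y"
  define Gv where "Gv = G x"
  define k where "k = (1 - \<rho>0) / 2"
  define \<rho>1 where "\<rho>1 = l * \<mu>1 / 2"
  define P' where "P' = (l / 2 + l\<^sup>2 / (2 * \<mu>) + (1 - \<rho>0) / 2 * L) * \<alpha>\<^sup>2 * nn\<^sup>2"
  define w where "w = Gv - k *\<^sub>R (F - Gv)"
  define K1 where "K1 = \<Phi> x - Pstar + k * (\<Phi> x - f x y) + \<alpha> * nn * \<rho>1 * norm w + 5 * P' * \<rho>1\<^sup>2 + Ny / 2"
  define K2 where "K2 = - \<alpha> * nn"
  define K3 where "K3 = 5/4 * P'"
  define Q where "Q u = K1 + K2 * ((F \<bullet> u) * (w \<bullet> u)) + K3 * ((F \<bullet> u) * (F \<bullet> u))" for u :: "real^'n"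
  have pw: "AE u in (uniform_sphere :: (real^'n) measure). Rf x y u \<le> Q u"
    using AE_sphere by eventually_elim
      (use xstep_pointwise in \<open>simp add: Q_def K1_def K2_def K3_def F_def Gv_def k_def \<rho>1_def P'_def w_def\<close>)
  have intQ: "integrable (uniform_sphere :: (real^'n) measure) Q"
    unfolding Q_def
    by (intro Bochner_Integration.integrable_add) (auto intro!: integrable_mult_right sphere_bilin(1) simp: S.emeasure_space_1)
  have Q0: "AE u in (uniform_sphere :: (real^'n) measure). 0 \<le> Q u"
    using pw by eventually_elim (use Rf_nonneg in \<open>metis order_trans\<close>)
  have intval: "(\<integral>u. Q u \<partial>(uniform_sphere :: (real^'n) measure)) = K1 + K2 * ((F \<bullet> w) / nn) + K3 * ((F \<bullet> F) / nn)"
    unfolding Q_def using sphere_bilin[of F w] sphere_bilin[of F F]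
    by (simp add: integral_add integrable_mult_right pu nn_def)
  have sc: "K1 + K2 * ((F \<bullet> w) / nn) + K3 * ((F \<bullet> F) / nn) \<le> Vf x y + 7/8 * \<alpha> * \<epsilon>\<^sup>2 - \<alpha> * \<epsilon> * norm (G x)"
    unfolding K1_def K2_def K3_def F_def Gv_def k_def \<rho>1_def P'_def w_def by (rule xstep_scalar)
  have "0 \<le> (\<integral>u. Q u \<partial>(uniform_sphere :: (real^'n) measure))"
    by (rule integral_nonneg_AE[OF Q0])
  then show "0 \<le> Vf x y + 7/8 * \<alpha> * \<epsilon>\<^sup>2 - \<alpha> * \<epsilon> * norm (G x)" using intval sc by linarith
  have "(\<integral>\<^sup>+u. ennreal (Rf x y u) \<partial>(uniform_sphere :: (real^'n) measure))
        \<le> (\<integral>\<^sup>+u. ennreal (Q u) \<partial>uniform_sphere)"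
    by (rule nn_integral_mono_AE) (use pw in \<open>eventually_elim, simp add: ennreal_leI\<close>)
  also have "\<dots> = ennreal (\<integral>u. Q u \<partial>uniform_sphere)"
    by (rule nn_integral_eq_integral[OF intQ Q0])
  finally show "(\<integral>\<^sup>+u. ennreal (Rf x y u) \<partial>(uniform_sphere :: (real^'n) measure))
     \<le> ennreal (Vf x y + 7/8 * \<alpha> * \<epsilon>\<^sup>2 - \<alpha> * \<epsilon> * norm (G x))"
    using intval sc by (simp add: ennreal_leI order_trans)
qed


lemma cont_f2: "continuous_on S a \<Longrightarrow> continuous_on S b \<Longrightarrow> continuous_on S (\<lambda>z. f (a z) (b z))"
  using continuous_on_compose2[OF f_cont, of S "\<lambda>z. (a z, b z)"] by (auto intro: continuous_on_Pair)

lemma cont_Phi: "continuous_on S a \<Longrightarrow> continuous_on S (\<lambda>z. \<Phi> (a z))"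
  using continuous_on_compose2[OF Phi_cont, of S a] by auto

lemma cont_G: "continuous_on S a \<Longrightarrow> continuous_on S (\<lambda>z. G (a z))"
  using continuous_on_compose2[OF G_cont, of S a] by auto

lemma cont_xnext:
  assumes "continuous_on S X" "continuous_on S Y" "continuous_on S U"
  shows "continuous_on S (\<lambda>z. xnext (X z) (Y z) (U z))"
  unfolding xnext_def using mu1_pos
  by (intro continuous_on_diff continuous_on_scaleR continuous_on_mult continuous_on_divide
      continuous_on_const cont_f2 continuous_on_add assms) auto

lemma cont_ynext:
  assumes "continuous_on S X" "continuous_on S Y" "continuous_on S V"
  shows "continuous_on S (\<lambda>z. ynext (X z) (Y z) (V z))"
  unfolding ynext_def using mu2_pos
  by (intro continuous_on_diff continuous_on_scaleR continuous_on_mult continuous_on_divide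
      continuous_on_const cont_f2 continuous_on_add assms) auto

lemma cont_Vf:
  assumes "continuous_on S X" "continuous_on S Y"
  shows "continuous_on S (\<lambda>z. Vf (X z) (Y z))"
  unfolding Vf_def
  by (intro continuous_on_diff continuous_on_add continuous_on_divide continuous_on_const cont_Phi cont_f2 assms) auto

definition stepf :: "((real^'n) \<times> (real^'m)) \<Rightarrow> ((real^'n) \<times> (real^'m)) \<Rightarrow> ((real^'n) \<times> (real^'m))" where
  "stepf s w = (xnext (fst s) (snd s) (fst w), ynext (xnext (fst s) (snd s) (fst w)) (snd s) (snd w))"

definition "Vs s = Vf (fst s) (snd s)"

lemma cont_stepf: "continuous_on UNIV (\<lambda>p. stepf (fst p) (snd p))"
  unfolding stepf_def
  by (intro continuous_on_Pair cont_xnext cont_ynext continuous_on_fst continuous_on_snd continuous_on_id)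

lemma meas_stepf: "(\<lambda>p. stepf (fst p) (snd p)) \<in> borel_measurable borel"
  by (rule borel_measurable_continuous_onI[OF cont_stepf])

lemma cont_Vs: "continuous_on UNIV Vs"
  unfolding Vs_def by (intro cont_Vf continuous_on_fst continuous_on_snd continuous_on_id)

lemma meas_Vs: "Vs \<in> borel_measurable borel"
  by (rule borel_measurable_continuous_onI[OF cont_Vs])

lemma meas_G: "G \<in> borel_measurable borel"
  by (rule borel_measurable_continuous_onI[OF G_cont])

lemma Vs_nonneg: "0 \<le> Vs s" unfolding Vs_def by (rule Vf_nonneg)

lemma onestep:
  fixes s :: "(real^'n) \<times> (real^'m)"
  shows "(\<integral>\<^sup>+w. ennreal (Vs (stepf s w)) \<partial>(uniform_sphere \<Otimes>\<^sub>M uniform_sphere)) + ennreal (\<alpha> * \<epsilon> * norm (G (fst s)))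
     \<le> ennreal (Vs s) + ennreal (7/8 * \<alpha> * \<epsilon>\<^sup>2)"
proof -
  interpret Sn: prob_space "uniform_sphere :: (real^'n) measure" by (rule prob_sphere)
  interpret Sm: prob_space "uniform_sphere :: (real^'m) measure" by (rule prob_sphere)
  obtain x y where s: "s = (x, y)" by (cases s)
  define h where "h w = ennreal (Vs (stepf s w))" for w :: "(real^'n) \<times> (real^'m)"
  have hm: "h \<in> borel_measurable ((uniform_sphere :: (real^'n) measure) \<Otimes>\<^sub>M (uniform_sphere :: (real^'m) measure))"
  proof -
    have cp: "continuous_on UNIV (Pair s)"
      by (intro continuous_on_Pair continuous_on_const continuous_on_id)
    have c1: "continuous_on UNIV (stepf s)"
      using continuous_on_compose2[OF cont_stepf cp] by simp
    have c: "continuous_on UNIV (\<lambda>w. Vs (stepf s w))"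
      using continuous_on_compose2[OF cont_Vs c1] by simp
    have "(\<lambda>w. Vs (stepf s w)) \<in> borel_measurable (borel \<Otimes>\<^sub>M borel)"
      unfolding borel_prod by (rule borel_measurable_continuous_onI[OF c])
    then have "h \<in> borel_measurable (borel \<Otimes>\<^sub>M borel)" unfolding h_def by measurable
    then show ?thesis
      by (simp add: measurable_cong_sets[OF sets_pair_measure_cong[OF sets_sphere sets_sphere] refl])
  qed
  have "(\<integral>\<^sup>+w. h w \<partial>(uniform_sphere \<Otimes>\<^sub>M uniform_sphere)) = (\<integral>\<^sup>+u. \<integral>\<^sup>+v. h (u, v) \<partial>uniform_sphere \<partial>uniform_sphere)"
    by (rule Sm.nn_integral_fst[symmetric, OF hm])
  also have "\<dots> \<le> (\<integral>\<^sup>+u. ennreal (Rf x y u) \<partial>uniform_sphere)"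
  proof (rule nn_integral_mono)
    fix u :: "real^'n"
    have "(\<integral>\<^sup>+v. h (u, v) \<partial>uniform_sphere) = (\<integral>\<^sup>+v. ennreal (Vf (xnext x y u) (ynext (xnext x y u) y v)) \<partial>(uniform_sphere :: (real^'m) measure))"
      unfolding h_def s stepf_def Vs_def by simp
    also have "\<dots> \<le> ennreal (Rf x y u)" unfolding Rf_def by (rule ystep)
    finally show "(\<integral>\<^sup>+v. h (u, v) \<partial>uniform_sphere) \<le> ennreal (Rf x y u)" .
  qed
  also have "\<dots> \<le> ennreal (Vf x y + 7/8 * \<alpha> * \<epsilon>\<^sup>2 - \<alpha> * \<epsilon> * norm (G x))" by (rule xstep(1))
  finally have I: "(\<integral>\<^sup>+w. h w \<partial>(uniform_sphere \<Otimes>\<^sub>M uniform_sphere)) \<le> ennreal (Vf x y + 7/8 * \<alpha> * \<epsilon>\<^sup>2 - \<alpha> * \<epsilon> * norm (G x))" .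
  have nn1: "0 \<le> Vf x y + 7/8 * \<alpha> * \<epsilon>\<^sup>2 - \<alpha> * \<epsilon> * norm (G x)" by (rule xstep(2))
  have nn2: "0 \<le> \<alpha> * \<epsilon> * norm (G x)" using alpha_pos eps_pos by simp
  have nn3: "0 \<le> 7/8 * \<alpha> * \<epsilon>\<^sup>2" using alpha_pos by simp
  have "(\<integral>\<^sup>+w. h w \<partial>(uniform_sphere \<Otimes>\<^sub>M uniform_sphere)) + ennreal (\<alpha> * \<epsilon> * norm (G x))
     \<le> ennreal (Vf x y + 7/8 * \<alpha> * \<epsilon>\<^sup>2 - \<alpha> * \<epsilon> * norm (G x)) + ennreal (\<alpha> * \<epsilon> * norm (G x))"
    using I by (rule add_right_mono)
  also have "\<dots> = ennreal (Vf x y + 7/8 * \<alpha> * \<epsilon>\<^sup>2)"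
    using nn1 nn2 by (simp add: ennreal_plus[symmetric])
  also have "\<dots> = ennreal (Vf x y) + ennreal (7/8 * \<alpha> * \<epsilon>\<^sup>2)"
    using Vf_nonneg nn3 by (simp add: ennreal_plus)
  finally show ?thesis unfolding h_def s Vs_def by simp
qed

end

locale zo_run = zo f \<mu> l \<alpha> \<beta> \<mu>1 \<mu>2 \<epsilon> Pstar
  for f :: "real^'n \<Rightarrow> real^'m \<Rightarrow> real" and \<mu> l \<alpha> \<beta> \<mu>1 \<mu>2 \<epsilon> Pstar +
  fixes M :: "'w measure" and u :: "nat \<Rightarrow> 'w \<Rightarrow> real^'n" and v :: "nat \<Rightarrow> 'w \<Rightarrow> real^'m"
    and x0 :: "real^'n" and y0 :: "real^'m"
  assumes M: "prob_space M"
    and indep: "prob_space.indep_vars M (\<lambda>_. borel) (\<lambda>t \<omega>. (u t \<omega>, v t \<omega>)) UNIV"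
    and distr_uv: "\<forall>t. distr M borel (\<lambda>\<omega>. (u t \<omega>, v t \<omega>)) = uniform_sphere \<Otimes>\<^sub>M uniform_sphere"
begin

interpretation P: prob_space M by (rule M)

definition W :: "nat \<Rightarrow> 'w \<Rightarrow> (real^'n) \<times> (real^'m)" where "W t \<omega> = (u t \<omega>, v t \<omega>)"

definition Psi :: "nat \<Rightarrow> (nat \<Rightarrow> (real^'n) \<times> (real^'m)) \<Rightarrow> (real^'n) \<times> (real^'m)" where
  "Psi t p = zo_agda f \<alpha> \<beta> \<mu>1 \<mu>2 x0 y0 (\<lambda>s. fst (p s)) (\<lambda>s. snd (p s)) t"

definition st :: "'w \<Rightarrow> nat \<Rightarrow> (real^'n) \<times> (real^'m)" where
  "st \<omega> t = zo_agda f \<alpha> \<beta> \<mu>1 \<mu>2 x0 y0 (\<lambda>s. u s \<omega>) (\<lambda>s. v s \<omega>) t"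

lemma zo_Suc: "zo_agda f \<alpha> \<beta> \<mu>1 \<mu>2 x0 y0 U V (Suc t) = stepf (zo_agda f \<alpha> \<beta> \<mu>1 \<mu>2 x0 y0 U V t) (U t, V t)"
  by (simp add: stepf_def xnext_def ynext_def Let_def)

lemma Psi_Suc: "Psi (Suc t) p = stepf (Psi t p) (p t)"
  unfolding Psi_def zo_Suc by simp

lemma Psi_0: "Psi 0 p = (x0, y0)" unfolding Psi_def by simp

lemma Psi_cong: "(\<And>s. s < t \<Longrightarrow> p s = q s) \<Longrightarrow> Psi t p = Psi t q"
proof (induction t)
  case 0 then show ?case by (simp add: Psi_0)
next
  case (Suc t) then show ?case by (simp add: Psi_Suc)
qed

lemma st_Psi: "st \<omega> t = Psi t (restrict (\<lambda>i. W i \<omega>) {..<t})"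
proof -
  have "st \<omega> t = Psi t (\<lambda>i. W i \<omega>)" unfolding st_def Psi_def W_def by simp
  also have "\<dots> = Psi t (restrict (\<lambda>i. W i \<omega>) {..<t})" by (rule Psi_cong) simp
  finally show ?thesis .
qed

lemma st_Suc: "st \<omega> (Suc t) = stepf (st \<omega> t) (W t \<omega>)"
  unfolding st_def W_def zo_Suc ..

lemma st_0: "st \<omega> 0 = (x0, y0)" unfolding st_def by simp

lemma meas_stepf': "(\<lambda>p. stepf (fst p) (snd p)) \<in> borel_measurable (borel \<Otimes>\<^sub>M borel)"
  unfolding borel_prod by (rule meas_stepf)

lemma W_meas: "W t \<in> measurable M borel"
  using indep unfolding P.indep_vars_def W_def by auto

lemma Psi_meas: "{..<t} \<subseteq> I \<Longrightarrow> Psi t \<in> measurable (PiM I (\<lambda>_. borel)) borel"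
proof (induction t)
  case 0 then show ?case by (simp add: Psi_0)
next
  case (Suc t)
  have sub: "{..<t} \<subseteq> I" using Suc.prems by auto
  have IH: "Psi t \<in> measurable (PiM I (\<lambda>_. borel)) borel" by (rule Suc.IH[OF sub])
  have tI: "t \<in> I" using Suc.prems by auto
  have "(\<lambda>p. (Psi t p, p t)) \<in> measurable (PiM I (\<lambda>_. borel)) (borel \<Otimes>\<^sub>M borel)"
    using IH measurable_component_singleton[OF tI, of "\<lambda>_. borel"] by (intro measurable_Pair) auto
  from measurable_compose[OF this meas_stepf'] show ?case
    by (simp add: Psi_Suc)
qed

lemma st_meas: "(\<lambda>\<omega>. st \<omega> t) \<in> measurable M borel"
proof (induction t)
  case 0 then show ?case by (simp add: st_0)
next
  case (Suc t)
  have "(\<lambda>\<omega>. (st \<omega> t, W t \<omega>)) \<in> measurable M (borel \<Otimes>\<^sub>M borel)"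
    using Suc W_meas by (intro measurable_Pair) auto
  from measurable_compose[OF this meas_stepf'] show ?case
    by (simp add: st_Suc)
qed


abbreviation nu :: "((real^'n) \<times> (real^'m)) measure" where
  "nu \<equiv> uniform_sphere \<Otimes>\<^sub>M uniform_sphere"

lemma nu_prob: "prob_space nu"
proof -
  interpret Sn: prob_space "uniform_sphere :: (real^'n) measure" by (rule prob_sphere)
  interpret Sm: prob_space "uniform_sphere :: (real^'m) measure" by (rule prob_sphere)
  interpret PP: pair_prob_space "uniform_sphere :: (real^'n) measure" "uniform_sphere :: (real^'m) measure" ..
  show ?thesis by (rule PP.prob_space_axioms)
qed

lemma sets_nu: "sets nu = sets (borel :: ((real^'n) \<times> (real^'m)) measure)"
proof -
  have "sets nu = sets ((borel :: (real^'n) measure) \<Otimes>\<^sub>M (borel :: (real^'m) measure))"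
    by (rule sets_pair_measure_cong[OF sets_sphere sets_sphere])
  also have "\<dots> = sets (borel :: ((real^'n) \<times> (real^'m)) measure)" by (simp only: borel_prod)
  finally show ?thesis .
qed

lemma key:
  fixes h :: "((real^'n) \<times> (real^'m)) \<times> ((real^'n) \<times> (real^'m)) \<Rightarrow> ennreal"
  assumes hm: "h \<in> borel_measurable (borel \<Otimes>\<^sub>M borel)"
  shows "(\<integral>\<^sup>+\<omega>. h (st \<omega> t, W t \<omega>) \<partial>M) = (\<integral>\<^sup>+\<omega>. (\<integral>\<^sup>+w. h (st \<omega> t, w) \<partial>nu) \<partial>M)"
proof -
  interpret N: sigma_finite_measure nu by (rule prob_space_imp_sigma_finite[OF nu_prob])
  define S where "S = PiM {..<t} (\<lambda>_. borel :: ((real^'n) \<times> (real^'m)) measure)"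
  define T where "T = PiM {t} (\<lambda>_. borel :: ((real^'n) \<times> (real^'m)) measure)"
  define X where "X \<omega> = restrict (\<lambda>i. W i \<omega>) {..<t}" for \<omega>
  define Y where "Y \<omega> = restrict (\<lambda>i. W i \<omega>) {t}" for \<omega>
  have indW: "prob_space.indep_vars M (\<lambda>_. borel) W UNIV" using indep unfolding W_def[abs_def] .
  have ind1: "prob_space.indep_var M S X T Y"
    unfolding S_def T_def X_def[abs_def] Y_def[abs_def] by (rule prob_space.indep_var_restrict[OF M indW]) auto
  have de: "distr M S X \<Otimes>\<^sub>M distr M T Y = distr M (S \<Otimes>\<^sub>M T) (\<lambda>\<omega>. (X \<omega>, Y \<omega>))"
    and Xm: "X \<in> measurable M S" and Ym: "Y \<in> measurable M T"
    using ind1 unfolding prob_space.indep_var_distribution_eq[OF M] by blast+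
  interpret N2: prob_space "distr M T Y" by (rule P.prob_space_distr[OF Ym])
  have dW: "distr M borel (W t) = nu" using distr_uv unfolding W_def[abs_def] by blast
  have Pm: "Psi t \<in> measurable S borel" unfolding S_def by (rule Psi_meas) simp
  have evm: "(\<lambda>b. b t) \<in> measurable T borel" unfolding T_def by (rule measurable_component_singleton) simp
  define h' where "h' z = h (Psi t (fst z), snd z t)" for z :: "(nat \<Rightarrow> (real^'n) \<times> (real^'m)) \<times> (nat \<Rightarrow> (real^'n) \<times> (real^'m))"
  have h'm: "h' \<in> borel_measurable (S \<Otimes>\<^sub>M T)"
  proof -
    have "(\<lambda>z. (Psi t (fst z), snd z t)) \<in> measurable (S \<Otimes>\<^sub>M T) (borel \<Otimes>\<^sub>M borel)"
      using Pm evm by (intro measurable_Pair) (auto intro: measurable_compose[OF measurable_fst] measurable_compose[OF measurable_snd])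
    from measurable_compose[OF this hm] show ?thesis unfolding h'_def by simp
  qed
  have h'm2: "h' \<in> borel_measurable (distr M S X \<Otimes>\<^sub>M distr M T Y)"
    using h'm by (simp add: measurable_cong_sets[OF sets_pair_measure_cong[OF sets_distr sets_distr] refl])
  define k where "k z = h (Psi t (fst z), snd z)" for z :: "(nat \<Rightarrow> (real^'n) \<times> (real^'m)) \<times> ((real^'n) \<times> (real^'m))"
  have km: "k \<in> borel_measurable (S \<Otimes>\<^sub>M nu)"
  proof -
    have "(\<lambda>z. (Psi t (fst z), snd z)) \<in> measurable (S \<Otimes>\<^sub>M borel) (borel \<Otimes>\<^sub>M borel)"
      using Pm by (intro measurable_Pair) (auto intro: measurable_compose[OF measurable_fst])
    from measurable_compose[OF this hm] have "k \<in> borel_measurable (S \<Otimes>\<^sub>M borel)" unfolding k_def by simp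
    then show ?thesis by (simp add: measurable_cong_sets[OF sets_pair_measure_cong[OF refl sets_nu] refl])
  qed
  have XYm: "(\<lambda>\<omega>. (X \<omega>, Y \<omega>)) \<in> measurable M (S \<Otimes>\<^sub>M T)"
    using Xm Ym by (intro measurable_Pair) auto
  have inner: "(\<integral>\<^sup>+b. h' (a, b) \<partial>distr M T Y) = (\<integral>\<^sup>+w. k (a, w) \<partial>nu)" if aS: "a \<in> space S" for a
  proof -
    have am: "(\<lambda>b. h' (a, b)) \<in> borel_measurable T"
      using measurable_Pair2[OF h'm aS] by simp
    have "(\<integral>\<^sup>+b. h' (a, b) \<partial>distr M T Y) = (\<integral>\<^sup>+\<omega>. h' (a, Y \<omega>) \<partial>M)"
      by (rule nn_integral_distr[OF Ym]) (use am in simp)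
    also have "\<dots> = (\<integral>\<^sup>+\<omega>. k (a, W t \<omega>) \<partial>M)" unfolding h'_def k_def Y_def by simp
    also have "\<dots> = (\<integral>\<^sup>+w. k (a, w) \<partial>distr M borel (W t))"
    proof (rule nn_integral_distr[symmetric, OF W_meas])
      have "(\<lambda>w. k (a, w)) \<in> borel_measurable nu" using measurable_Pair2[OF km] aS by (simp add: space_pair_measure)
      then show "(\<lambda>w. k (a, w)) \<in> borel_measurable (distr M borel (W t))" unfolding dW .
    qed
    also have "\<dots> = (\<integral>\<^sup>+w. k (a, w) \<partial>nu)" unfolding dW ..
    finally show ?thesis .
  qed
  have "(\<integral>\<^sup>+\<omega>. h (st \<omega> t, W t \<omega>) \<partial>M) = (\<integral>\<^sup>+\<omega>. h' (X \<omega>, Y \<omega>) \<partial>M)"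
    unfolding h'_def X_def Y_def st_Psi by simp
  also have "\<dots> = (\<integral>\<^sup>+z. h' z \<partial>distr M (S \<Otimes>\<^sub>M T) (\<lambda>\<omega>. (X \<omega>, Y \<omega>)))"
    by (rule nn_integral_distr[symmetric, OF XYm]) (use h'm in simp)
  also have "\<dots> = (\<integral>\<^sup>+z. h' z \<partial>(distr M S X \<Otimes>\<^sub>M distr M T Y))" unfolding de[symmetric] ..
  also have "\<dots> = (\<integral>\<^sup>+a. \<integral>\<^sup>+b. h' (a, b) \<partial>distr M T Y \<partial>distr M S X)"
    by (rule N2.nn_integral_fst[symmetric, OF h'm2])
  also have "\<dots> = (\<integral>\<^sup>+a. \<integral>\<^sup>+w. k (a, w) \<partial>nu \<partial>distr M S X)"
    by (rule nn_integral_cong) (simp add: inner)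
  also have "\<dots> = (\<integral>\<^sup>+\<omega>. \<integral>\<^sup>+w. k (X \<omega>, w) \<partial>nu \<partial>M)"
  proof (rule nn_integral_distr[OF Xm])
    show "(\<lambda>a. \<integral>\<^sup>+w. k (a, w) \<partial>nu) \<in> borel_measurable (distr M S X)"
      using N.borel_measurable_nn_integral_fst[OF km] by simp
  qed
  also have "\<dots> = (\<integral>\<^sup>+\<omega>. (\<integral>\<^sup>+w. h (st \<omega> t, w) \<partial>nu) \<partial>M)"
    unfolding k_def X_def st_Psi by simp
  finally show ?thesis .
qed


definition "EV t = (\<integral>\<^sup>+\<omega>. ennreal (Vs (st \<omega> t)) \<partial>M)"
definition "EG t = (\<integral>\<^sup>+\<omega>. ennreal (norm (G (fst (st \<omega> t)))) \<partial>M)"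

lemma emeas_M: "emeasure M (space M) = 1" by (rule P.emeasure_space_1)

lemma EV0: "EV 0 = ennreal (Vs (x0, y0))"
  unfolding EV_def st_0 by (simp add: emeas_M)

lemma recur: "EV (Suc t) + ennreal (\<alpha> * \<epsilon>) * EG t \<le> EV t + ennreal (7/8 * \<alpha> * \<epsilon>\<^sup>2)"
proof -
  interpret N: sigma_finite_measure nu by (rule prob_space_imp_sigma_finite[OF nu_prob])
  define h where "h z = ennreal (Vs (stepf (fst z) (snd z)))" for z :: "((real^'n) \<times> (real^'m)) \<times> ((real^'n) \<times> (real^'m))"
  have hm: "h \<in> borel_measurable (borel \<Otimes>\<^sub>M borel)"
    unfolding h_def using measurable_compose[OF meas_stepf' meas_Vs] by measurable
  have hm2: "h \<in> borel_measurable (borel \<Otimes>\<^sub>M nu)"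
    using hm by (simp add: measurable_cong_sets[OF sets_pair_measure_cong[OF refl sets_nu] refl])
  have Im: "(\<lambda>s. \<integral>\<^sup>+w. h (s, w) \<partial>nu) \<in> borel_measurable borel"
    by (rule N.borel_measurable_nn_integral_fst[OF hm2])
  define A where "A \<omega> = (\<integral>\<^sup>+w. h (st \<omega> t, w) \<partial>nu)" for \<omega>
  define B where "B \<omega> = ennreal (\<alpha> * \<epsilon> * norm (G (fst (st \<omega> t))))" for \<omega>
  have Am: "A \<in> borel_measurable M" unfolding A_def using measurable_compose[OF st_meas Im] by simp
  have Gfm: "(\<lambda>s::(real^'n) \<times> (real^'m). G (fst s)) \<in> borel_measurable borel"
    by (intro borel_measurable_continuous_onI cont_G continuous_on_fst continuous_on_id)
  have Gm: "(\<lambda>\<omega>. norm (G (fst (st \<omega> t)))) \<in> borel_measurable M"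
    using measurable_compose[OF st_meas Gfm] by measurable
  have Bm: "B \<in> borel_measurable M" unfolding B_def using Gm by measurable
  have Vm: "(\<lambda>\<omega>. ennreal (Vs (st \<omega> t))) \<in> borel_measurable M"
    using measurable_compose[OF st_meas meas_Vs] by measurable
  have "EV (Suc t) = (\<integral>\<^sup>+\<omega>. h (st \<omega> t, W t \<omega>) \<partial>M)"
    unfolding EV_def h_def st_Suc by simp
  also have "\<dots> = (\<integral>\<^sup>+\<omega>. A \<omega> \<partial>M)" unfolding A_def by (rule key[OF hm])
  finally have e1: "EV (Suc t) = (\<integral>\<^sup>+\<omega>. A \<omega> \<partial>M)" .
  have e2: "ennreal (\<alpha> * \<epsilon>) * EG t = (\<integral>\<^sup>+\<omega>. B \<omega> \<partial>M)"
  proof -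
    have "ennreal (\<alpha> * \<epsilon>) * EG t = (\<integral>\<^sup>+\<omega>. ennreal (\<alpha> * \<epsilon>) * ennreal (norm (G (fst (st \<omega> t)))) \<partial>M)"
      unfolding EG_def by (rule nn_integral_cmult[symmetric]) (use Gm in measurable)
    also have "\<dots> = (\<integral>\<^sup>+\<omega>. B \<omega> \<partial>M)"
      unfolding B_def using alpha_pos eps_pos by (simp add: ennreal_mult)
    finally show ?thesis .
  qed
  have "EV (Suc t) + ennreal (\<alpha> * \<epsilon>) * EG t = (\<integral>\<^sup>+\<omega>. A \<omega> + B \<omega> \<partial>M)"
    unfolding e1 e2 by (rule nn_integral_add[symmetric, OF Am Bm])
  also have "\<dots> \<le> (\<integral>\<^sup>+\<omega>. ennreal (Vs (st \<omega> t)) + ennreal (7/8 * \<alpha> * \<epsilon>\<^sup>2) \<partial>M)"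
  proof (rule nn_integral_mono)
    fix \<omega>
    show "A \<omega> + B \<omega> \<le> ennreal (Vs (st \<omega> t)) + ennreal (7/8 * \<alpha> * \<epsilon>\<^sup>2)"
      unfolding A_def B_def h_def using onestep[of "st \<omega> t"] by simp
  qed
  also have "\<dots> = EV t + ennreal (7/8 * \<alpha> * \<epsilon>\<^sup>2)"
    unfolding EV_def by (subst nn_integral_add) (use Vm in \<open>auto simp: emeas_M\<close>)
  finally show ?thesis .
qed

lemma tele: "EV T + ennreal (\<alpha> * \<epsilon>) * (\<Sum>t<T. EG t) \<le> EV 0 + of_nat T * ennreal (7/8 * \<alpha> * \<epsilon>\<^sup>2)"
proof (induction T)
  case 0 then show ?case by simp
next
  case (Suc T)
  have "EV (Suc T) + ennreal (\<alpha> * \<epsilon>) * (\<Sum>t<Suc T. EG t)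
      = (EV (Suc T) + ennreal (\<alpha> * \<epsilon>) * EG T) + ennreal (\<alpha> * \<epsilon>) * (\<Sum>t<T. EG t)"
    by (simp add: distrib_left add_ac)
  also have "\<dots> \<le> (EV T + ennreal (7/8 * \<alpha> * \<epsilon>\<^sup>2)) + ennreal (\<alpha> * \<epsilon>) * (\<Sum>t<T. EG t)"
    by (intro add_right_mono recur)
  also have "\<dots> = (EV T + ennreal (\<alpha> * \<epsilon>) * (\<Sum>t<T. EG t)) + ennreal (7/8 * \<alpha> * \<epsilon>\<^sup>2)"
    by (simp add: add_ac)
  also have "\<dots> \<le> (EV 0 + of_nat T * ennreal (7/8 * \<alpha> * \<epsilon>\<^sup>2)) + ennreal (7/8 * \<alpha> * \<epsilon>\<^sup>2)"
    by (intro add_right_mono Suc.IH)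
  also have "\<dots> = EV 0 + of_nat (Suc T) * ennreal (7/8 * \<alpha> * \<epsilon>\<^sup>2)"
    by (simp add: distrib_right add_ac)
  finally show ?case .
qed

lemma final_bound:
  assumes "\<forall>t<T. \<not> EG t \<le> ennreal \<epsilon>"
  shows "real T \<le> 8 * Vs (x0, y0) / (\<alpha> * \<epsilon>\<^sup>2)"
proof -
  define c where "c = 7/8 * \<alpha> * \<epsilon>\<^sup>2"
  have c0: "0 \<le> c" unfolding c_def using alpha_pos by simp
  have V0: "0 \<le> Vs (x0, y0)" by (rule Vs_nonneg)
  have "of_nat T * ennreal \<epsilon> = (\<Sum>t<T. ennreal \<epsilon>)" by simp
  also have "\<dots> \<le> (\<Sum>t<T. EG t)"
    by (rule sum_mono) (use assms in \<open>auto simp: not_le less_imp_le\<close>)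
  finally have s1: "of_nat T * ennreal \<epsilon> \<le> (\<Sum>t<T. EG t)" .
  have "ennreal (real T * \<alpha> * \<epsilon>\<^sup>2) = ennreal (\<alpha> * \<epsilon>) * (of_nat T * ennreal \<epsilon>)"
    using alpha_pos eps_pos by (simp add: ennreal_mult[symmetric] ennreal_of_nat_eq_real_of_nat power2_eq_square mult_ac)
  also have "\<dots> \<le> ennreal (\<alpha> * \<epsilon>) * (\<Sum>t<T. EG t)" by (intro mult_left_mono s1) simp
  also have "\<dots> \<le> EV T + ennreal (\<alpha> * \<epsilon>) * (\<Sum>t<T. EG t)" by simp
  also have "\<dots> \<le> EV 0 + of_nat T * ennreal c" using tele unfolding c_def .
  also have "\<dots> = ennreal (Vs (x0, y0) + real T * c)"
    unfolding EV0 using c0 V0 by (simp add: ennreal_plus ennreal_mult ennreal_of_nat_eq_real_of_nat)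
  finally have "real T * \<alpha> * \<epsilon>\<^sup>2 \<le> Vs (x0, y0) + real T * c"
    using c0 V0 by (subst (asm) ennreal_le_iff) auto
  then have "real T * (\<alpha> * \<epsilon>\<^sup>2) \<le> 8 * Vs (x0, y0)" unfolding c_def by (simp add: algebra_simps)
  moreover have "0 < \<alpha> * \<epsilon>\<^sup>2" using alpha_pos eps_pos by simp
  ultimately show ?thesis by (simp add: le_divide_eq)
qed

end

theorem theorem1:
  fixes f :: "real^'n \<Rightarrow> real^'m \<Rightarrow> real"
    and M :: "'w measure"
    and u :: "nat \<Rightarrow> 'w \<Rightarrow> real^'n"
    and v :: "nat \<Rightarrow> 'w \<Rightarrow> real^'m"
    and \<mu> l \<epsilon> \<alpha> \<beta> \<kappa> L \<theta>1 \<mu>1 \<mu>2 :: real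
    and x0 :: "real^'n" and y0 :: "real^'m"
    and E :: "nat \<Rightarrow> ennreal"
  assumes M: "prob_space M"
    and indep: "prob_space.indep_vars M (\<lambda>_. borel) (\<lambda>t \<omega>. (u t \<omega>, v t \<omega>)) UNIV"
    and distr_uv: "\<forall>t. distr M borel (\<lambda>\<omega>. (u t \<omega>, v t \<omega>)) = uniform_sphere \<Otimes>\<^sub>M uniform_sphere"
    and dx: "\<forall>x y. (\<lambda>x'. f x' y) differentiable (at x)"
    and dy: "\<forall>x y. (f x) differentiable (at y)"
    and max_attained: "\<forall>x. \<exists>y. \<forall>y'. f x y' \<le> f x y"
    and mu_pos: "0 < \<mu>"
    and PL: "\<forall>x y. (norm (grad (f x) y))\<^sup>2 \<ge> 2 * \<mu> * (Phi f x - f x y)"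
    and l_pos: "0 < l"
    and lip_x: "\<forall>x1 x2 y1 y2. norm (grad (\<lambda>x. f x y1) x1 - grad (\<lambda>x. f x y2) x2)
                   \<le> l * (norm (x1 - x2) + norm (y1 - y2))"
    and lip_y: "\<forall>x1 x2 y1 y2. norm (grad (f x1) y1 - grad (f x2) y2)
                   \<le> l * (norm (x1 - x2) + norm (y1 - y2))"
    and min_exists: "\<exists>xs. \<forall>x. Phi f xs \<le> Phi f x"
    and kappa_def: "\<kappa> = l / \<mu>"
    and L_def: "L = l + l\<^sup>2 / (2 * \<mu>)"
    and eps_pos: "0 < \<epsilon>"
    and beta_pos: "0 < \<beta>"
    and beta_le: "\<beta> \<le> 1 / (4 * real CARD('m) * L)"
    and alpha_pos: "0 < \<alpha>"
    and alpha_le: "\<alpha> \<le> min (\<beta> / (32 * \<kappa>\<^sup>2)) (1 / (10 * real CARD('n) * L))"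
    and theta1_def: "\<theta>1 = (5 * real CARD('n) * L + 3 / (2 * \<alpha>) + 3 / 2 * L + real CARD('m) * L)
                          * (real CARD('n))\<^sup>2 * L\<^sup>2 * \<alpha>\<^sup>2"
    and mu1_def: "\<mu>1 = sqrt \<alpha> * \<epsilon> / (2 * sqrt \<theta>1)"
    and mu2_def: "\<mu>2 = sqrt \<alpha> * \<epsilon> / (sqrt (3 * \<beta>) * real CARD('m) * L)"
    and E_def: "E = (\<lambda>t. \<integral>\<^sup>+ \<omega>. ennreal (norm (grad (Phi f)
                   (fst (zo_agda f \<alpha> \<beta> \<mu>1 \<mu>2 x0 y0 (\<lambda>s. u s \<omega>) (\<lambda>s. v s \<omega>) t)))) \<partial>M)"
  shows "(\<exists>t. E t \<le> ennreal \<epsilon>) \<and>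
         real (LEAST t. E t \<le> ennreal \<epsilon>)
           \<le> 4 * (3 * Phi f x0 - f x0 y0 - 2 * (INF x. Phi f x)) / (\<alpha> * \<epsilon>\<^sup>2)"
proof -
  interpret P: prob_space M by (rule M)
  obtain xs where xs: "\<forall>x. Phi f xs \<le> Phi f x" using min_exists by blast
  define Pstar where "Pstar = (INF x. Phi f x)"
  have Pst: "Pstar = Phi f xs" unfolding Pstar_def
    by (rule cInf_eq_minimum) (use xs in auto)
  have Pstar: "\<forall>x. Pstar \<le> Phi f x" using Pst xs by simp
  have Lp: "0 < l + l\<^sup>2 / (2 * \<mu>)" using l_pos mu_pos by (simp add: add_pos_nonneg)
  have Lpos: "0 < L" unfolding L_def using Lp .
  have th_ge: "\<theta>1 \<ge> 3 / 2 * (real CARD('n))\<^sup>2 * L\<^sup>2 * \<alpha>"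
  proof -
    have "5 * real CARD('n) * L + 3 / (2 * \<alpha>) + 3 / 2 * L + real CARD('m) * L \<ge> 3 / (2 * \<alpha>)"
      using Lpos by simp
    then have "\<theta>1 \<ge> 3 / (2 * \<alpha>) * (real CARD('n))\<^sup>2 * L\<^sup>2 * \<alpha>\<^sup>2"
      unfolding theta1_def by (intro mult_right_mono) auto
    also have "3 / (2 * \<alpha>) * (real CARD('n))\<^sup>2 * L\<^sup>2 * \<alpha>\<^sup>2 = 3 / 2 * (real CARD('n))\<^sup>2 * L\<^sup>2 * \<alpha>"
      using alpha_pos by (simp add: power2_eq_square field_simps)
    finally show ?thesis .
  qed
  have thpos: "0 < \<theta>1"
  proof -
    have "0 < 3 / 2 * (real CARD('n))\<^sup>2 * L\<^sup>2 * \<alpha>" using Lpos alpha_pos by simp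
    then show ?thesis using th_ge by linarith
  qed
  have mu1p: "0 < \<mu>1" unfolding mu1_def using alpha_pos eps_pos thpos by simp
  have mu2p: "0 < \<mu>2" unfolding mu2_def using alpha_pos eps_pos beta_pos Lpos by simp
  have noise1: "(real CARD('n))\<^sup>2 * L\<^sup>2 * \<mu>1\<^sup>2 \<le> \<epsilon>\<^sup>2 / 6"
  proof -
    have m1: "\<mu>1\<^sup>2 = \<alpha> * \<epsilon>\<^sup>2 / (4 * \<theta>1)"
      unfolding mu1_def using alpha_pos thpos by (simp add: power2_eq_square field_simps)
    have "(real CARD('n))\<^sup>2 * L\<^sup>2 * \<mu>1\<^sup>2 = ((real CARD('n))\<^sup>2 * L\<^sup>2 * \<alpha>) * \<epsilon>\<^sup>2 / (4 * \<theta>1)"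
      unfolding m1 by simp
    also have "\<dots> \<le> (2 / 3 * \<theta>1) * \<epsilon>\<^sup>2 / (4 * \<theta>1)"
      using th_ge thpos by (intro divide_right_mono mult_right_mono) auto
    also have "\<dots> = \<epsilon>\<^sup>2 / 6" using thpos by simp
    finally show ?thesis .
  qed
  have noise2: "\<beta> * (real CARD('m))\<^sup>2 * L\<^sup>2 * \<mu>2\<^sup>2 \<le> \<alpha> * \<epsilon>\<^sup>2 / 3"
  proof -
    have "\<mu>2\<^sup>2 = \<alpha> * \<epsilon>\<^sup>2 / (3 * \<beta> * (real CARD('m))\<^sup>2 * L\<^sup>2)"
      unfolding mu2_def using alpha_pos beta_pos by (simp add: power_divide power_mult_distrib less_imp_le)
    then show ?thesis using beta_pos Lpos by (simp add: field_simps)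
  qed
  have al1: "\<alpha> \<le> \<beta> / (32 * (l / \<mu>)\<^sup>2)" using alpha_le kappa_def by simp
  have al2: "\<alpha> \<le> 1 / (10 * real CARD('n) * (l + l\<^sup>2 / (2 * \<mu>)))" using alpha_le L_def by simp
  have mm: "minimax f \<mu> l" unfolding minimax_def using dx dy max_attained mu_pos PL l_pos lip_x lip_y by blast
  have za: "zo_axioms f \<mu> l \<alpha> \<beta> \<mu>1 \<mu>2 \<epsilon> Pstar"
    unfolding zo_axioms_def
    by (intro conjI alpha_pos beta_pos eps_pos mu1p mu2p Pstar al1 al2 beta_le[unfolded L_def]
        noise1[unfolded L_def] noise2[unfolded L_def])
  have zr: "zo_run_axioms M u v"
    unfolding zo_run_axioms_def using M indep distr_uv by blast
  interpret Z: zo_run f \<mu> l \<alpha> \<beta> \<mu>1 \<mu>2 \<epsilon> Pstar M u v x0 y0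
    by (intro zo_run.intro zo.intro mm za zr)
  have gP: "grad (Phi f) = Z.G" using Z.grad_Phi by (simp add: fun_eq_iff)
  have EE: "E t = Z.EG t" for t
    unfolding E_def Z.EG_def Z.st_def gP ..
  define bound where "bound = 4 * (3 * Phi f x0 - f x0 y0 - 2 * (INF x. Phi f x)) / (\<alpha> * \<epsilon>\<^sup>2)"
  have "8 * Z.Vs (x0, y0) = 4 * (3 * Phi f x0 - f x0 y0 - 2 * (INF x. Phi f x))"
    unfolding Z.Vs_def Z.Vf_def by (simp add: Pstar_def field_simps)
  then have bnd: "8 * Z.Vs (x0, y0) / (\<alpha> * \<epsilon>\<^sup>2) = bound"
    unfolding bound_def by simp
  have fb: "real T \<le> bound" if "\<forall>t<T. \<not> E t \<le> ennreal \<epsilon>" for T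
    using Z.final_bound[of T] that unfolding EE bnd by blast
  have ex: "\<exists>t. E t \<le> ennreal \<epsilon>"
  proof (rule ccontr)
    assume "\<not> (\<exists>t. E t \<le> ennreal \<epsilon>)"
    then have "real (nat \<lceil>bound\<rceil> + 1) \<le> bound" using fb by blast
    moreover have "bound \<le> real (nat \<lceil>bound\<rceil>)" by linarith
    ultimately show False by simp
  qed
  have "\<forall>t<(LEAST t. E t \<le> ennreal \<epsilon>). \<not> E t \<le> ennreal \<epsilon>"
    using not_less_Least by blast
  then have "real (LEAST t. E t \<le> ennreal \<epsilon>) \<le> bound" by (rule fb)
  then show ?thesis using ex unfolding bound_def by blast
qed

end
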